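(* Let $n\ge1$, $U\in C^1(\overline{\mathbb R}^{n+1}_+,F)$ and $\Gamma\in C^1(\overline{\mathbb R}^{n+1}_+,\mathcal L(\mathbb R^{n+1},\mathfrak o(F)))$. Then for all $x,y,z\in\overline{\mathbb R}^{n+1}_+$, $$|U(x)-R^\Gamma(x,y)U(y)|\le|U(x)-R^\Gamma(x,z)U(z)|+|U(y)-R^\Gamma(y,z)U(z)|+|U(z)|\min\{2,\|\mathscr K_\Gamma\|_\infty|\Delta_{x,y,z}|\},$$ where $|\Delta_{x,y,z}|$ is the area of the triangle with vertices $x,y,z$.
   Context: $F$ finite-dimensional real Euclidean space, $\mathfrak o(F)$ its skew-symmetric endomorphisms, $\overline{\mathbb R}^{n+1}_+=\mathbb R^n\times[0,\infty)$. Parallel transport along a $C^1$ path: $P'(t)+\Gamma(\gamma(t))[\dot\gamma(t)]P(t)=0$, $P(1)=\mathrm{id}_F$; $R^\Gamma(x,y)=P^\Gamma_{\gamma_{x,y}}(0)$, $\gamma_{x,y}(t)=(1-t)x+ty$. Curvature $\mathscr K_\Gamma(x)[v,w]=D\Gamma(x)[v,w]-D\Gamma(x)[w,v]+\Gamma(x)[v]\Gamma(x)[w]-\Gamma(x)[w]\Gamma(x)[v]$, $D\Gamma(x)[v,w]=\frac{d}{dt}|_0\Gamma(x+tv)[w]$; $\|\mathscr K_\Gamma\|_\infty=\sup_x\sup_{v,w\ne0}|\mathscr K_\Gamma(x)[v,w]|/(|v||w|)$ (operator norm). *)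

theory Defs
  imports "HOL-Analysis.Analysis"
begin

text \<open>Closed upper half space of R^{n+1}, modelled as (real^'n) x real (last coordinate = snd).\<close>
definition half_space :: "((real^'n) \<times> real) set" where
  "half_space = {p. snd p \<ge> 0}"

definition skew :: "('f::euclidean_space \<Rightarrow>\<^sub>L 'f) \<Rightarrow> bool" where
  "skew A \<longleftrightarrow> (\<forall>a b. inner (A a) b = - inner a (A b))"

definition is_parallel_transport ::
  "('p::real_normed_vector \<Rightarrow> ('p \<Rightarrow>\<^sub>L ('f::euclidean_space \<Rightarrow>\<^sub>L 'f))) \<Rightarrow> 'p \<Rightarrow> 'p
    \<Rightarrow> (real \<Rightarrow> ('f \<Rightarrow>\<^sub>L 'f)) \<Rightarrow> bool" where
  "is_parallel_transport \<Gamma> x y P \<longleftrightarrow>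
     P 1 = id_blinfun \<and>
     (\<forall>t\<in>{0..1}. (P has_vector_derivative
        (- ((\<Gamma> ((1 - t) *\<^sub>R x + t *\<^sub>R y) (y - x)) o\<^sub>L P t))) (at t within {0..1}))"

definition transport ::
  "('p::real_normed_vector \<Rightarrow> ('p \<Rightarrow>\<^sub>L ('f::euclidean_space \<Rightarrow>\<^sub>L 'f))) \<Rightarrow> 'p \<Rightarrow> 'p \<Rightarrow> ('f \<Rightarrow>\<^sub>L 'f)" where
  "transport \<Gamma> x y = (THE A. \<exists>P. is_parallel_transport \<Gamma> x y P \<and> P 0 = A)"

text \<open>Curvature, with DG the derivative of Gamma: DG x v w = D Gamma(x)[v,w].\<close>
definition curvature ::
  "('p::real_normed_vector \<Rightarrow> ('p \<Rightarrow>\<^sub>L ('f::euclidean_space \<Rightarrow>\<^sub>L 'f)))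
   \<Rightarrow> ('p \<Rightarrow> ('p \<Rightarrow>\<^sub>L ('p \<Rightarrow>\<^sub>L ('f \<Rightarrow>\<^sub>L 'f)))) \<Rightarrow> 'p \<Rightarrow> 'p \<Rightarrow> 'p \<Rightarrow> ('f \<Rightarrow>\<^sub>L 'f)" where
  "curvature \<Gamma> DG x v w =
     DG x v w - DG x w v + (\<Gamma> x v o\<^sub>L \<Gamma> x w) - (\<Gamma> x w o\<^sub>L \<Gamma> x v)"

definition curvature_sup ::
  "('p::real_normed_vector \<Rightarrow> ('p \<Rightarrow>\<^sub>L ('f::euclidean_space \<Rightarrow>\<^sub>L 'f)))
   \<Rightarrow> ('p \<Rightarrow> ('p \<Rightarrow>\<^sub>L ('p \<Rightarrow>\<^sub>L ('f \<Rightarrow>\<^sub>L 'f)))) \<Rightarrow> 'p set \<Rightarrow> ereal" where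
  "curvature_sup \<Gamma> DG S =
     (SUP x\<in>S. SUP vw\<in>{(v, w). v \<noteq> 0 \<and> w \<noteq> 0}.
        ereal (norm (curvature \<Gamma> DG x (fst vw) (snd vw)) / (norm (fst vw) * norm (snd vw))))"

definition triangle_area :: "'p::real_inner \<Rightarrow> 'p \<Rightarrow> 'p \<Rightarrow> real" where
  "triangle_area x y z =
     (let a = y - x; b = z - x in sqrt ((norm a)\<^sup>2 * (norm b)\<^sup>2 - (inner a b)\<^sup>2) / 2)"

end

theory Submission
  imports Defs
begin

primrec picard :: "(real \<Rightarrow> ('e::banach \<Rightarrow>\<^sub>L 'e)) \<Rightarrow> 'e \<Rightarrow> nat \<Rightarrow> real \<Rightarrow> 'e" where
  "picard L X0 0 = (\<lambda>t. X0)"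
| "picard L X0 (Suc n) = (\<lambda>t. integral {0..t} (\<lambda>s. L s (picard L X0 n s)))"

lemma power_has_integral_0:
  assumes "0 \<le> t"
  shows "((\<lambda>s::real. s ^ n) has_integral (t ^ Suc n / Suc n)) {0..t}"
proof -
  have "((\<lambda>s::real. s ^ n) has_integral (t ^ Suc n / Suc n - 0 ^ Suc n / Suc n)) {0..t}"
    apply (rule fundamental_theorem_of_calculus[OF assms])
    unfolding has_real_derivative_iff_has_vector_derivative[symmetric]
    apply (rule has_field_derivative_at_within)
    apply (rule derivative_eq_intros refl)+
    apply (cases n) apply (simp_all add: field_simps del: of_nat_Suc)
    done
  then show ?thesis by simp
qed

lemma picard_props:
  fixes L :: "real \<Rightarrow> ('e::banach \<Rightarrow>\<^sub>L 'e)"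
  assumes cont: "continuous_on {0..1} L" and c: "\<And>t. t \<in> {0..1} \<Longrightarrow> norm (L t) \<le> c" and c0: "0 \<le> c"
  shows "continuous_on {0..1} (picard L X0 n) \<and>
    (\<forall>t\<in>{0..1}. norm (picard L X0 n t) \<le> norm X0 * c ^ n * t ^ n / fact n)"
proof (induction n)
  case 0
  then show ?case by (simp add: continuous_on_const)
next
  case (Suc n)
  let ?f = "\<lambda>s. L s (picard L X0 n s)"
  have cf: "continuous_on {0..1} ?f"
    using Suc.IH cont by (intro continuous_intros) auto
  have "continuous_on {0..1} (\<lambda>t. integral {0..t} ?f)"
    by (rule indefinite_integral_continuous_1[OF integrable_continuous_real[OF cf]])
  moreover have "norm (integral {0..t} ?f) \<le> norm X0 * c ^ Suc n * t ^ Suc n / fact (Suc n)"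
    if t: "t \<in> {0..1}" for t
  proof -
    have sub: "{0..t} \<subseteq> {0..1}" using t by auto
    have int1: "?f integrable_on {0..t}"
      using integrable_continuous_real[OF continuous_on_subset[OF cf sub]] .
    have hi: "((\<lambda>s. c * (norm X0 * c ^ n / fact n) * s ^ n) has_integral
         c * (norm X0 * c ^ n / fact n) * (t ^ Suc n / Suc n)) {0..t}"
      using power_has_integral_0[of t n] t by (intro has_integral_mult_right) auto
    have "norm (integral {0..t} ?f) \<le> integral {0..t} (\<lambda>s. c * (norm X0 * c ^ n / fact n) * s ^ n)"
    proof (rule integral_norm_bound_integral[OF int1])
      show "(\<lambda>s. c * (norm X0 * c ^ n / fact n) * s ^ n) integrable_on {0..t}"
        using hi by blast
      fix s assume s: "s \<in> {0..t}"
      then have s1: "s \<in> {0..1}" using t by auto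
      have "norm (?f s) \<le> norm (L s) * norm (picard L X0 n s)"
        by (rule norm_blinfun)
      also have "\<dots> \<le> c * (norm X0 * c ^ n * s ^ n / fact n)"
        using Suc.IH s1 c[OF s1] c0 by (intro mult_mono) auto
      finally show "norm (?f s) \<le> c * (norm X0 * c ^ n / fact n) * s ^ n" by simp
    qed
    also have "\<dots> = c * (norm X0 * c ^ n / fact n) * (t ^ Suc n / Suc n)"
      by (rule integral_unique[OF hi])
    also have "\<dots> = norm X0 * c ^ Suc n * t ^ Suc n / fact (Suc n)"
      by (simp add: field_simps del: of_nat_Suc)
    finally show ?thesis .
  qed
  ultimately show ?case by simp
qed

lemma ode_exists_fwd:
  fixes L :: "real \<Rightarrow> ('e::banach \<Rightarrow>\<^sub>L 'e)"
  assumes cont: "continuous_on {0..1} L"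
  shows "\<exists>X. X 0 = X0 \<and> continuous_on {0..1} X \<and>
    (\<forall>t\<in>{0..1}. (X has_vector_derivative L t (X t)) (at t within {0..1}))"
proof -
  have "compact (L ` {0..1})" by (rule compact_continuous_image[OF cont compact_Icc])
  then obtain c0 where c0: "\<And>t. t \<in> {0..1} \<Longrightarrow> norm (L t) \<le> c0"
    by (meson bounded_iff compact_imp_bounded image_eqI)
  define c where "c = max c0 0"
  have c: "\<And>t. t \<in> {0..1} \<Longrightarrow> norm (L t) \<le> c" and cpos: "0 \<le> c"
    using c0 unfolding c_def by (auto intro: max.coboundedI1)
  note pp = picard_props[OF cont c cpos, of X0]
  define M where "M n = norm X0 * (inverse (fact n) * c ^ n)" for n
  have Msum: "summable M" unfolding M_def by (intro summable_mult summable_exp)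
  have Mb: "norm (picard L X0 n t) \<le> M n" if "t \<in> {0..1}" for n t
  proof -
    have "norm (picard L X0 n t) \<le> norm X0 * c ^ n * t ^ n / fact n" using pp that by blast
    also have "\<dots> \<le> norm X0 * c ^ n * 1 / fact n"
      using that cpos by (intro divide_right_mono mult_left_mono power_le_one) auto
    finally show ?thesis by (simp add: M_def field_simps)
  qed
  define Z where "Z N t = (\<Sum>i<N. picard L X0 i t)" for N t
  define X where "X t = suminf (\<lambda>i. picard L X0 i t)" for t
  have ul: "uniform_limit {0..1} Z X sequentially"
    unfolding Z_def[abs_def] X_def[abs_def]
    by (rule Weierstrass_m_test[OF Mb Msum]) auto
  have cZ: "continuous_on {0..1} (Z N)" for N
    unfolding Z_def using pp by (intro continuous_on_sum) auto
  have cX: "continuous_on {0..1} X"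
    by (rule uniform_limit_theorem[OF _ ul]) (auto simp: cZ)
  have cLX: "continuous_on {0..1} (\<lambda>s. L s (X s))"
    using cont cX by (intro continuous_intros)
  have cLZ: "continuous_on {0..1} (\<lambda>s. L s (Z N s))" for N
    using cont cZ by (intro continuous_intros)
  have intZ: "(\<lambda>s. L s (Z N s)) integrable_on {0..t}" if "t \<in> {0..1}" for N t
    by (rule integrable_continuous_real, rule continuous_on_subset[OF cLZ]) (use that in auto)
  have intP: "(\<lambda>s. L s (picard L X0 N s)) integrable_on {0..t}" if "t \<in> {0..1}" for N t
  proof -
    have "continuous_on {0..1} (\<lambda>s. L s (picard L X0 N s))"
      using pp cont by (intro continuous_intros) auto
    then show ?thesis
      by (rule integrable_continuous_real[OF continuous_on_subset]) (use that in auto)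
  qed
  have Zrec: "Z (Suc N) t = X0 + integral {0..t} (\<lambda>s. L s (Z N s))" if t: "t \<in> {0..1}" for N t
  proof (induction N)
    case 0
    have "Z 1 t = X0" by (simp add: Z_def)
    moreover have "integral {0..t} (\<lambda>s. L s (Z 0 s)) = 0" by (simp add: Z_def)
    ultimately show ?case by simp
  next
    case (Suc N)
    have "Z (Suc (Suc N)) t = Z (Suc N) t + picard L X0 (Suc N) t" by (simp add: Z_def)
    also have "\<dots> = X0 + (integral {0..t} (\<lambda>s. L s (Z N s)) + integral {0..t} (\<lambda>s. L s (picard L X0 N s)))"
      using Suc by simp
    also have "integral {0..t} (\<lambda>s. L s (Z N s)) + integral {0..t} (\<lambda>s. L s (picard L X0 N s))
        = integral {0..t} (\<lambda>s. L s (Z N s) + L s (picard L X0 N s))"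
      by (rule integral_add[symmetric, OF intZ[OF t] intP[OF t]])
    also have "(\<lambda>s. L s (Z N s) + L s (picard L X0 N s)) = (\<lambda>s. L s (Z (Suc N) s))"
      by (simp add: Z_def blinfun.add_right)
    finally show ?case .
  qed
  have Xeq: "X t = X0 + integral {0..t} (\<lambda>s. L s (X s))" if t: "t \<in> {0..1}" for t
  proof -
    have l1: "(\<lambda>N. Z (Suc N) t) \<longlonglongrightarrow> X t"
      using ul t unfolding uniform_limit_iff
      by (intro LIMSEQ_Suc) (auto simp: tendsto_iff elim!: eventually_mono)
    have ul2: "uniform_limit {0..t} (\<lambda>N s. L s (Z N s)) (\<lambda>s. L s (X s)) sequentially"
      unfolding uniform_limit_iff
    proof (intro allI impI)
      fix e :: real assume e: "e > 0"
      have "e / (c + 1) > 0" using e cpos by auto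
      then have "\<forall>\<^sub>F N in sequentially. \<forall>s\<in>{0..1}. dist (Z N s) (X s) < e / (c + 1)"
        using ul unfolding uniform_limit_iff by blast
      then show "\<forall>\<^sub>F N in sequentially. \<forall>s\<in>{0..t}. dist (L s (Z N s)) (L s (X s)) < e"
      proof (rule eventually_mono, intro ballI)
        fix N s assume H: "\<forall>s\<in>{0..1}. dist (Z N s) (X s) < e / (c + 1)" and s: "s \<in> {0..t}"
        have s1: "s \<in> {0..1}" using s t by auto
        have "dist (L s (Z N s)) (L s (X s)) = norm (L s (Z N s - X s))"
          by (simp add: dist_norm blinfun.diff_right)
        also have "\<dots> \<le> norm (L s) * norm (Z N s - X s)" by (rule norm_blinfun)
        also have "\<dots> \<le> c * (e / (c + 1))"
          using H s1 c[OF s1] cpos by (intro mult_mono) (auto simp: dist_norm less_imp_le)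
        also have "\<dots> < e" using e cpos by (simp add: field_simps)
        finally show "dist (L s (Z N s)) (L s (X s)) < e" .
      qed
    qed
    obtain I J where I: "\<And>N. ((\<lambda>s. L s (Z N s)) has_integral I N) {0..t}"
      and J: "((\<lambda>s. L s (X s)) has_integral J) {0..t}" and IJ: "I \<longlonglongrightarrow> J"
      by (rule uniform_limit_integral[OF ul2]) (use t in \<open>auto intro: continuous_on_subset[OF cLZ]\<close>)
    have "(\<lambda>N. Z (Suc N) t) = (\<lambda>N. X0 + I N)"
      using Zrec[OF t] I by (auto simp: integral_unique)
    then have l2: "(\<lambda>N. Z (Suc N) t) \<longlonglongrightarrow> X0 + J"
      using IJ by (auto intro: tendsto_add)
    have "X t = X0 + J" using LIMSEQ_unique[OF l1 l2] .
    then show ?thesis using J by (simp add: integral_unique)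
  qed
  have "X 0 = X0" using Xeq[of 0] by simp
  moreover have "(X has_vector_derivative L t (X t)) (at t within {0..1})" if t: "t \<in> {0..1}" for t
  proof (rule has_vector_derivative_transform[OF t])
    show "X s = X0 + integral {0..s} (\<lambda>s. L s (X s))" if "s \<in> {0..1}" for s using Xeq that .
    show "((\<lambda>s. X0 + integral {0..s} (\<lambda>s. L s (X s))) has_vector_derivative L t (X t)) (at t within {0..1})"
      using integral_has_vector_derivative[OF cLX t]
      by (auto intro!: derivative_eq_intros)
  qed
  ultimately show ?thesis using cX by blast
qed


lemma ode_exists_bwd:
  fixes L :: "real \<Rightarrow> ('e::banach \<Rightarrow>\<^sub>L 'e)"
  assumes cont: "continuous_on {0..1} L"
  shows "\<exists>X. X 1 = X1 \<and> continuous_on {0..1} X \<and>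
    (\<forall>t\<in>{0..1}. (X has_vector_derivative L t (X t)) (at t within {0..1}))"
proof -
  have c2: "continuous_on {0..1} (\<lambda>s. - L (1 - s))"
    by (intro continuous_intros continuous_on_compose2[OF cont]) auto
  obtain Y where Y0: "Y 0 = X1" and cY: "continuous_on {0..1} Y"
    and dY: "\<And>s. s\<in>{0..1} \<Longrightarrow> (Y has_vector_derivative (- L (1 - s)) (Y s)) (at s within {0..1})"
    using ode_exists_fwd[OF c2, of X1] by blast
  have img: "(\<lambda>t::real. 1 - t) ` {0..1} = {0..1}"
    by (auto simp: image_iff intro!: bexI[where x="1 - _"])
  define X where "X t = Y (1 - t)" for t
  have "X 1 = X1" using Y0 by (simp add: X_def)
  moreover have "continuous_on {0..1} X"
    unfolding X_def by (rule continuous_on_compose2[OF cY]) (auto intro!: continuous_intros)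
  moreover have "(X has_vector_derivative L t (X t)) (at t within {0..1})" if t: "t \<in> {0..1}" for t
  proof -
    have d1: "((\<lambda>t. 1 - t) has_vector_derivative (-1::real)) (at t within {0..1})"
      by (auto intro!: derivative_eq_intros)
    have d2: "(Y has_vector_derivative (- L (1 - (1 - t))) (Y (1 - t))) (at (1 - t) within (\<lambda>t. 1 - t) ` {0..1})"
      unfolding img using dY[of "1 - t"] t by auto
    have "((Y \<circ> (\<lambda>t. 1 - t)) has_vector_derivative ((-1) *\<^sub>R (- L (1 - (1 - t))) (Y (1 - t)))) (at t within {0..1})"
      by (rule vector_diff_chain_within[OF d1 d2])
    then show ?thesis by (simp add: X_def[abs_def] o_def blinfun.minus_left)
  qed
  ultimately show ?thesis by blast
qed

definition cL :: "('f::real_normed_vector \<Rightarrow>\<^sub>L 'f) \<Rightarrow> (('f \<Rightarrow>\<^sub>L 'f) \<Rightarrow>\<^sub>L ('f \<Rightarrow>\<^sub>L 'f))" where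
  "cL A = bounded_bilinear.prod_right (o\<^sub>L) A"
definition cR :: "('f::real_normed_vector \<Rightarrow>\<^sub>L 'f) \<Rightarrow> (('f \<Rightarrow>\<^sub>L 'f) \<Rightarrow>\<^sub>L ('f \<Rightarrow>\<^sub>L 'f))" where
  "cR A = bounded_bilinear.prod_left (o\<^sub>L) A"

lemma cL_apply[simp]: "cL A X = A o\<^sub>L X"
  unfolding cL_def
  apply (subst bounded_bilinear.prod_right.rep_eq)
   apply (rule bounded_bilinear_blinfun_compose)
  apply (rule refl)
  done
lemma cR_apply[simp]: "cR A X = X o\<^sub>L A"
  unfolding cR_def
  apply (subst bounded_bilinear.prod_left.rep_eq)
   apply (rule bounded_bilinear_blinfun_compose)
  apply (rule refl)
  done

lemma cL_cont: "continuous_on S A \<Longrightarrow> continuous_on S (\<lambda>t. cL (A t))"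
  unfolding cL_def
  by (rule bounded_linear.continuous_on[OF bounded_bilinear.bounded_linear_prod_right[OF bounded_bilinear_blinfun_compose]])
lemma cR_cont: "continuous_on S A \<Longrightarrow> continuous_on S (\<lambda>t. cR (A t))"
  unfolding cR_def
  by (rule bounded_linear.continuous_on[OF bounded_bilinear.bounded_linear_prod_left[OF bounded_bilinear_blinfun_compose]])

lemma transp_exists:
  fixes A :: "real \<Rightarrow> ('f::euclidean_space \<Rightarrow>\<^sub>L 'f)"
  assumes "continuous_on {0..1} A"
  shows "\<exists>P. P 1 = id_blinfun \<and> continuous_on {0..1} P \<and>
    (\<forall>t\<in>{0..1}. (P has_vector_derivative - (A t o\<^sub>L P t)) (at t within {0..1}))"
proof -
  have "continuous_on {0..1} (\<lambda>t. cL (- A t))"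
    using assms by (intro cL_cont continuous_intros)
  from ode_exists_bwd[OF this, of id_blinfun] show ?thesis
    by (simp add: bounded_bilinear.minus_left[OF bounded_bilinear_blinfun_compose])
qed


lemmas hvd_apply = bounded_bilinear.has_vector_derivative[OF bounded_bilinear_blinfun_apply]
lemmas hvd_compose = bounded_bilinear.has_vector_derivative[OF bounded_bilinear_blinfun_compose]
lemmas hvd_inner = bounded_bilinear.has_vector_derivative[OF bounded_bilinear_inner]

lemma blinfun_compose_assoc: "(a o\<^sub>L b) o\<^sub>L c = a o\<^sub>L (b o\<^sub>L c)"
  by (rule blinfun_eqI) simp

lemma skew_inner_self: "skew A \<Longrightarrow> inner (A a) a = 0"
proof -
  assume "skew A"
  then have "inner (A a) a = - inner a (A a)" unfolding skew_def by blast
  then show ?thesis using inner_commute[of a "A a"] by linarith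
qed

lemma energy:
  fixes A P :: "real \<Rightarrow> ('f::euclidean_space \<Rightarrow>\<^sub>L 'f)"
  assumes sk: "\<And>t. t \<in> {0..1} \<Longrightarrow> skew (A t)"
    and dP: "\<And>t. t \<in> {0..1} \<Longrightarrow> (P has_vector_derivative - (A t o\<^sub>L P t)) (at t within {0..1})"
    and t: "t \<in> {0..1}" and s: "s \<in> {0..1}"
  shows "inner (P t v) (P t w) = inner (P s v) (P s w)"
proof (rule has_derivative_zero_unique[OF convex_real_interval(5) _ t s])
  fix r :: real assume r: "r \<in> {0..1}"
  have dv: "((\<lambda>r. P r v) has_vector_derivative (- (A r o\<^sub>L P r)) v) (at r within {0..1})"
    using hvd_apply[OF dP[OF r], of "\<lambda>_. v" 0] by simp
  have dw: "((\<lambda>r. P r w) has_vector_derivative (- (A r o\<^sub>L P r)) w) (at r within {0..1})"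
    using hvd_apply[OF dP[OF r], of "\<lambda>_. w" 0] by simp
  have "((\<lambda>r. inner (P r v) (P r w)) has_vector_derivative
      (inner (P r v) ((- (A r o\<^sub>L P r)) w) + inner ((- (A r o\<^sub>L P r)) v) (P r w))) (at r within {0..1})"
    by (rule hvd_inner[OF dv dw])
  moreover have "inner (P r v) ((- (A r o\<^sub>L P r)) w) + inner ((- (A r o\<^sub>L P r)) v) (P r w) = 0"
  proof -
    have "inner (A r (P r v)) (P r w) = - inner (P r v) (A r (P r w))"
      using sk[OF r] unfolding skew_def by blast
    then show ?thesis by (simp add: blinfun.minus_left inner_minus_left inner_minus_right)
  qed
  ultimately show "((\<lambda>r. inner (P r v) (P r w)) has_derivative (\<lambda>h. 0)) (at r within {0..1})"
    by (simp add: has_vector_derivative_def)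
qed

lemma transp_isometry:
  fixes A P :: "real \<Rightarrow> ('f::euclidean_space \<Rightarrow>\<^sub>L 'f)"
  assumes sk: "\<And>t. t \<in> {0..1} \<Longrightarrow> skew (A t)"
    and dP: "\<And>t. t \<in> {0..1} \<Longrightarrow> (P has_vector_derivative - (A t o\<^sub>L P t)) (at t within {0..1})"
    and P1: "P 1 = id_blinfun" and t: "t \<in> {0..1}"
  shows "norm (P t v) = norm v"
proof -
  have "inner (P t v) (P t v) = inner (P 1 v) (P 1 v)" by (rule energy[OF sk dP t]) auto
  then show ?thesis using P1 by (simp add: norm_eq_sqrt_inner)
qed

lemma transp_unique:
  fixes A P Q :: "real \<Rightarrow> ('f::euclidean_space \<Rightarrow>\<^sub>L 'f)"
  assumes sk: "\<And>t. t \<in> {0..1} \<Longrightarrow> skew (A t)"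
    and dP: "\<And>t. t \<in> {0..1} \<Longrightarrow> (P has_vector_derivative - (A t o\<^sub>L P t)) (at t within {0..1})"
    and dQ: "\<And>t. t \<in> {0..1} \<Longrightarrow> (Q has_vector_derivative - (A t o\<^sub>L Q t)) (at t within {0..1})"
    and PQ: "P 1 = Q 1" and t: "t \<in> {0..1}"
  shows "P t = Q t"
proof -
  have dX: "((\<lambda>t. P t - Q t) has_vector_derivative - (A t o\<^sub>L (P t - Q t))) (at t within {0..1})"
    if "t \<in> {0..1}" for t
    using has_vector_derivative_diff[OF dP[OF that] dQ[OF that]]
    by (simp add: bounded_bilinear.diff_right[OF bounded_bilinear_blinfun_compose])
  show ?thesis
  proof (rule blinfun_eqI)
    fix v
    have "inner ((P t - Q t) v) ((P t - Q t) v) = inner ((P 1 - Q 1) v) ((P 1 - Q 1) v)"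
      by (rule energy[OF sk dX t]) auto
    then show "P t v = Q t v" using PQ by (simp add: blinfun.diff_left)
  qed
qed

lemma norm_le1: "(\<And>v. norm (blinfun_apply B v) = norm v) \<Longrightarrow> norm (B::'a::real_normed_vector \<Rightarrow>\<^sub>L 'b::real_normed_vector) \<le> 1"
  by (rule norm_blinfun_bound) auto

lemma transp_inverse:
  fixes A P S :: "real \<Rightarrow> ('f::euclidean_space \<Rightarrow>\<^sub>L 'f)"
  assumes sk: "\<And>t. t \<in> {0..1} \<Longrightarrow> skew (A t)"
    and dP: "\<And>t. t \<in> {0..1} \<Longrightarrow> (P has_vector_derivative - (A t o\<^sub>L P t)) (at t within {0..1})"
    and P1: "P 1 = id_blinfun"
    and dS: "\<And>t. t \<in> {0..1} \<Longrightarrow> (S has_vector_derivative (S t o\<^sub>L A t)) (at t within {0..1})"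
    and S1: "S 1 = id_blinfun" and t: "t \<in> {0..1}"
  shows "S t o\<^sub>L P t = id_blinfun" "P t o\<^sub>L S t = id_blinfun" "norm (S t w) = norm w"
proof -
  have "S t o\<^sub>L P t = S 1 o\<^sub>L P 1"
  proof (rule has_derivative_zero_unique[OF convex_real_interval(5) _ t])
    fix r :: real assume r: "r \<in> {0..1}"
    have "((\<lambda>r. S r o\<^sub>L P r) has_vector_derivative ((S r o\<^sub>L - (A r o\<^sub>L P r)) + ((S r o\<^sub>L A r) o\<^sub>L P r)))
       (at r within {0..1})"
      by (rule hvd_compose[OF dS[OF r] dP[OF r]])
    moreover have "(S r o\<^sub>L - (A r o\<^sub>L P r)) + ((S r o\<^sub>L A r) o\<^sub>L P r) = 0"
      by (simp add: bounded_bilinear.minus_right[OF bounded_bilinear_blinfun_compose] blinfun_compose_assoc)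
    ultimately show "((\<lambda>r. S r o\<^sub>L P r) has_derivative (\<lambda>h. 0)) (at r within {0..1})"
      by (simp add: has_vector_derivative_def)
  qed auto
  moreover have "id_blinfun o\<^sub>L id_blinfun = (id_blinfun :: 'f \<Rightarrow>\<^sub>L 'f)" by (rule blinfun_eqI) simp
  ultimately show SP: "S t o\<^sub>L P t = id_blinfun" using S1 P1 by simp
  have iso: "norm (P t v) = norm v" for v by (rule transp_isometry[OF sk dP P1 t])
  have "inj (P t)"
  proof (rule injI)
    fix a b assume "P t a = P t b"
    then have "norm (P t (a - b)) = 0" by (simp add: blinfun.diff_right)
    then show "a = b" using iso[of "a - b"] by simp
  qed
  then have "surj (P t)" using blinfun.bounded_linear_right bounded_linear_def linear_inj_imp_surj by blast
  then obtain v where v: "w = P t v" by blast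
  have Sv: "S t (P t v) = v" using SP by (metis blinfun_apply_blinfun_compose id_blinfun.rep_eq id_apply)
  show "norm (S t w) = norm w" using v Sv iso by simp
  show "P t o\<^sub>L S t = id_blinfun"
  proof (rule blinfun_eqI)
    fix u
    obtain v where "u = P t v" using \<open>surj (P t)\<close> by blast
    then show "(P t o\<^sub>L S t) u = id_blinfun u"
      using SP by (metis blinfun_apply_blinfun_compose id_blinfun.rep_eq id_apply)
  qed
qed


lemma int_bound01:
  fixes f :: "real \<Rightarrow> 'b::real_normed_vector"
  assumes "0 \<le> B" "(f has_integral i) {a..b}" "\<And>x. x \<in> {a..b} \<Longrightarrow> norm (f x) \<le> B" "a \<le> b"
  shows "norm i \<le> B * (b - a)"
  using has_integral_bound_real[of B "{}" f i a b] assms by auto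

lemma duhamel:
  fixes A B P Q S :: "real \<Rightarrow> ('f::euclidean_space \<Rightarrow>\<^sub>L 'f)"
  assumes sk: "\<And>t. t \<in> {0..1} \<Longrightarrow> skew (A t)"
    and dP: "\<And>t. t \<in> {0..1} \<Longrightarrow> (P has_vector_derivative - (A t o\<^sub>L P t)) (at t within {0..1})"
    and P1: "P 1 = id_blinfun"
    and dQ: "\<And>t. t \<in> {0..1} \<Longrightarrow> (Q has_vector_derivative - (B t o\<^sub>L Q t)) (at t within {0..1})"
    and Q1: "Q 1 = id_blinfun"
    and dS: "\<And>t. t \<in> {0..1} \<Longrightarrow> (S has_vector_derivative (S t o\<^sub>L A t)) (at t within {0..1})"
    and S1: "S 1 = id_blinfun" and t: "t \<in> {0..1}"
  shows "((\<lambda>s. S s o\<^sub>L ((B s - A s) o\<^sub>L Q s)) has_integral ((S t o\<^sub>L Q t) - id_blinfun)) {t..1}"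
    "Q t - P t = P t o\<^sub>L ((S t o\<^sub>L Q t) - id_blinfun)"
proof -
  have sub: "{t..1} \<subseteq> {0..1}" using t by auto
  have d: "((\<lambda>s. S s o\<^sub>L Q s) has_vector_derivative - (S s o\<^sub>L ((B s - A s) o\<^sub>L Q s))) (at s within {t..1})"
    if s: "s \<in> {t..1}" for s
  proof -
    have s1: "s \<in> {0..1}" using s sub by auto
    have "((\<lambda>s. S s o\<^sub>L Q s) has_vector_derivative ((S s o\<^sub>L - (B s o\<^sub>L Q s)) + ((S s o\<^sub>L A s) o\<^sub>L Q s)))
       (at s within {0..1})"
      by (rule hvd_compose[OF dS[OF s1] dQ[OF s1]])
    moreover have "(S s o\<^sub>L - (B s o\<^sub>L Q s)) + ((S s o\<^sub>L A s) o\<^sub>L Q s) = - (S s o\<^sub>L ((B s - A s) o\<^sub>L Q s))"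
      by (rule blinfun_eqI) (simp add: blinfun.bilinear_simps)
    ultimately show ?thesis using has_vector_derivative_within_subset[OF _ sub] by metis
  qed
  have "((\<lambda>s. - (S s o\<^sub>L ((B s - A s) o\<^sub>L Q s))) has_integral ((S 1 o\<^sub>L Q 1) - (S t o\<^sub>L Q t))) {t..1}"
    using fundamental_theorem_of_calculus[of t 1, OF _ d] t by auto
  moreover have "S 1 o\<^sub>L Q 1 = id_blinfun" using S1 Q1 by (intro blinfun_eqI) simp
  ultimately have "((\<lambda>s. - (S s o\<^sub>L ((B s - A s) o\<^sub>L Q s))) has_integral - ((S t o\<^sub>L Q t) - id_blinfun)) {t..1}"
    by simp
  then show "((\<lambda>s. S s o\<^sub>L ((B s - A s) o\<^sub>L Q s)) has_integral ((S t o\<^sub>L Q t) - id_blinfun)) {t..1}"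
    using has_integral_neg_iff[of "\<lambda>s. S s o\<^sub>L ((B s - A s) o\<^sub>L Q s)"] by simp
  have PS: "P t o\<^sub>L S t = id_blinfun" by (rule transp_inverse(2)[OF sk dP P1 dS S1 t])
  show "Q t - P t = P t o\<^sub>L ((S t o\<^sub>L Q t) - id_blinfun)"
  proof (rule blinfun_eqI)
    fix v
    have "P t (S t (Q t v)) = Q t v" using PS by (metis blinfun_apply_blinfun_compose id_blinfun.rep_eq id_apply)
    then show "(Q t - P t) v = (P t o\<^sub>L ((S t o\<^sub>L Q t) - id_blinfun)) v"
      by (simp add: blinfun.bilinear_simps)
  qed
qed

lemma duhamel_bound:
  fixes A B P Q S :: "real \<Rightarrow> ('f::euclidean_space \<Rightarrow>\<^sub>L 'f)"
  assumes sk: "\<And>t. t \<in> {0..1} \<Longrightarrow> skew (A t)"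
    and skB: "\<And>t. t \<in> {0..1} \<Longrightarrow> skew (B t)"
    and dP: "\<And>t. t \<in> {0..1} \<Longrightarrow> (P has_vector_derivative - (A t o\<^sub>L P t)) (at t within {0..1})"
    and P1: "P 1 = id_blinfun"
    and dQ: "\<And>t. t \<in> {0..1} \<Longrightarrow> (Q has_vector_derivative - (B t o\<^sub>L Q t)) (at t within {0..1})"
    and Q1: "Q 1 = id_blinfun"
    and dS: "\<And>t. t \<in> {0..1} \<Longrightarrow> (S has_vector_derivative (S t o\<^sub>L A t)) (at t within {0..1})"
    and S1: "S 1 = id_blinfun" and t: "t \<in> {0..1}"
    and e: "\<And>s. s \<in> {0..1} \<Longrightarrow> norm (B s - A s) \<le> e"
  shows "norm (Q t - P t) \<le> e"
proof -
  have e0: "0 \<le> e" using e[of 1] norm_ge_zero[of "B 1 - A 1"] by (meson atLeastAtMost_iff order.trans zero_le_one order_refl)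
  note D = duhamel[OF sk dP P1 dQ Q1 dS S1 t]
  have "norm ((S t o\<^sub>L Q t) - id_blinfun) \<le> e * (1 - t)"
  proof (rule int_bound01[OF e0 D(1)])
    fix s assume s: "s \<in> {t..1}"
    then have s1: "s \<in> {0..1}" using t by auto
    have "norm (S s o\<^sub>L ((B s - A s) o\<^sub>L Q s)) \<le> norm (S s) * (norm (B s - A s) * norm (Q s))"
      by (meson mult_left_mono norm_blinfun_compose norm_ge_zero order_trans)
    also have "\<dots> \<le> 1 * (e * 1)"
      using norm_le1[of "S s", OF transp_inverse(3)[OF sk dP P1 dS S1 s1]]
        norm_le1[of "Q s", OF transp_isometry[OF skB dQ Q1 s1]] e[OF s1] e0
      by (intro mult_mono) auto
    finally show "norm (S s o\<^sub>L ((B s - A s) o\<^sub>L Q s)) \<le> e" by simp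
  qed (use t in auto)
  also have "\<dots> \<le> e" using t e0 by (simp add: mult_left_le)
  finally have "norm ((S t o\<^sub>L Q t) - id_blinfun) \<le> e" .
  then show ?thesis
    using D(2) norm_blinfun_compose[of "P t"] norm_le1[of "P t", OF transp_isometry[OF sk dP P1 t]]
    by (smt (verit) mult_left_le_one_le norm_ge_zero)
qed


lemma transport_facts:
  fixes \<Gamma> :: "'p::real_normed_vector \<Rightarrow> ('p \<Rightarrow>\<^sub>L ('f::euclidean_space \<Rightarrow>\<^sub>L 'f))"
  assumes cvx: "convex H" and cG: "continuous_on H \<Gamma>" and sk: "\<And>p v. p \<in> H \<Longrightarrow> skew (\<Gamma> p v)"
    and p: "p \<in> H" and q: "q \<in> H"
  shows "\<exists>P. is_parallel_transport \<Gamma> p q P \<and> continuous_on {0..1} P \<and> transport \<Gamma> p q = P 0"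
proof -
  define A where "A t = \<Gamma> ((1 - t) *\<^sub>R p + t *\<^sub>R q) (q - p)" for t
  have inH: "(1 - t) *\<^sub>R p + t *\<^sub>R q \<in> H" if "t \<in> {0..1}" for t
    using that convexD[OF cvx p q, of "1 - t" t] by auto
  have cA: "continuous_on {0..1} A"
    unfolding A_def
    by (intro continuous_intros continuous_on_compose2[OF cG] ) (auto intro: inH)
  have skA: "skew (A t)" if "t \<in> {0..1}" for t unfolding A_def using sk inH that by blast
  obtain P where P1: "P 1 = id_blinfun" and cP: "continuous_on {0..1} P"
    and dP: "\<And>t. t \<in> {0..1} \<Longrightarrow> (P has_vector_derivative - (A t o\<^sub>L P t)) (at t within {0..1})"
    using transp_exists[OF cA] by blast
  have ipt: "is_parallel_transport \<Gamma> p q P"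
    unfolding is_parallel_transport_def using P1 dP by (auto simp: A_def)
  have "transport \<Gamma> p q = P 0"
    unfolding transport_def
  proof (rule the_equality)
    show "\<exists>P'. is_parallel_transport \<Gamma> p q P' \<and> P' 0 = P 0" using ipt by blast
    fix B assume "\<exists>P'. is_parallel_transport \<Gamma> p q P' \<and> P' 0 = B"
    then obtain P' where ipt': "is_parallel_transport \<Gamma> p q P'" and B: "P' 0 = B" by blast
    have "P' 0 = P 0"
    proof (rule transp_unique[OF skA _ dP])
      show "(P' has_vector_derivative - (A t o\<^sub>L P' t)) (at t within {0..1})" if "t \<in> {0..1}" for t
        using ipt' that unfolding is_parallel_transport_def A_def by blast
      show "P' 1 = P 1" using ipt' P1 unfolding is_parallel_transport_def by simp
    qed auto
    then show "B = P 0" using B by simp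
  qed
  then show ?thesis using ipt cP by blast
qed

lemma ipt_deriv:
  assumes "is_parallel_transport \<Gamma> p q P" "t \<in> {0..1}"
  shows "(P has_vector_derivative - (\<Gamma> ((1 - t) *\<^sub>R p + t *\<^sub>R q) (q - p) o\<^sub>L P t)) (at t within {0..1})"
  using assms unfolding is_parallel_transport_def by blast

lemma transport_isometry:
  fixes \<Gamma> :: "'p::real_normed_vector \<Rightarrow> ('p \<Rightarrow>\<^sub>L ('f::euclidean_space \<Rightarrow>\<^sub>L 'f))"
  assumes cvx: "convex H" and cG: "continuous_on H \<Gamma>" and sk: "\<And>p v. p \<in> H \<Longrightarrow> skew (\<Gamma> p v)"
    and p: "p \<in> H" and q: "q \<in> H"
  shows "norm (transport \<Gamma> p q v) = norm v"
proof -
  obtain P where ipt: "is_parallel_transport \<Gamma> p q P" and T: "transport \<Gamma> p q = P 0"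
    using transport_facts[OF assms] by blast
  have inH: "(1 - t) *\<^sub>R p + t *\<^sub>R q \<in> H" if "t \<in> {0..1}" for t
    using that convexD[OF cvx p q, of "1 - t" t] by auto
  show ?thesis unfolding T
    by (rule transp_isometry[where A="\<lambda>t. \<Gamma> ((1 - t) *\<^sub>R p + t *\<^sub>R q) (q - p)"])
      (use ipt ipt_deriv inH sk in \<open>auto simp: is_parallel_transport_def\<close>)
qed


locale tri =
  fixes \<Gamma> :: "'p::euclidean_space \<Rightarrow> ('p \<Rightarrow>\<^sub>L ('f::euclidean_space \<Rightarrow>\<^sub>L 'f))"
    and DG :: "'p \<Rightarrow> ('p \<Rightarrow>\<^sub>L ('p \<Rightarrow>\<^sub>L ('f \<Rightarrow>\<^sub>L 'f)))"
    and H :: "'p set" and x y z :: 'p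
  assumes cvx: "convex H"
    and G_deriv: "\<And>p. p \<in> H \<Longrightarrow> (\<Gamma> has_derivative blinfun_apply (DG p)) (at p within H)"
    and G_cont: "continuous_on H DG"
    and G_skew: "\<And>p v. p \<in> H \<Longrightarrow> skew (\<Gamma> p v)"
    and xH: "x \<in> H" and yH: "y \<in> H" and zH: "z \<in> H"
begin

definition "ee = z - y"
definition "uu s = y + s *\<^sub>R ee"
definition "aa s = uu s - x"
definition "phi s t = x + t *\<^sub>R aa s"
definition "AA s t = \<Gamma> (phi s t) (aa s)"
definition "dAA s t = DG (phi s t) (t *\<^sub>R ee) (aa s) + \<Gamma> (phi s t) ee"
definition "TT = convex hull {x, y, z}"

lemma cGam: "continuous_on H \<Gamma>"
  using G_deriv has_derivative_continuous continuous_on_eq_continuous_within by blast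

lemma TT_sub: "TT \<subseteq> H"
  unfolding TT_def using xH yH zH cvx by (simp add: convex_hull_subset hull_subset subset_hull)

lemma TT_compact: "compact TT" unfolding TT_def by (simp add: compact_convex_hull)
lemma TT_convex: "convex TT" unfolding TT_def by simp

lemma phi_eq: "phi s t = (1 - t) *\<^sub>R x + (t * (1 - s)) *\<^sub>R y + (t * s) *\<^sub>R z"
  unfolding phi_def aa_def uu_def ee_def by (simp add: algebra_simps)

lemma phi_TT: "s \<in> {0..1} \<Longrightarrow> t \<in> {0..1} \<Longrightarrow> phi s t \<in> TT"
  unfolding TT_def convex_hull_3 phi_eq
  by (rule CollectI, rule exI[of _ "1 - t"], rule exI[of _ "t * (1 - s)"], rule exI[of _ "t * s"])
    (auto simp: algebra_simps mult_left_le_one_le)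

lemma phi_H: "s \<in> {0..1} \<Longrightarrow> t \<in> {0..1} \<Longrightarrow> phi s t \<in> H"
  using phi_TT TT_sub by blast

lemma seg_phi: "(1 - t) *\<^sub>R x + t *\<^sub>R uu s = phi s t"
  unfolding phi_def aa_def by (simp add: algebra_simps)
lemma seg_u: "(1 - t) *\<^sub>R y + t *\<^sub>R z = uu t"
  unfolding uu_def ee_def by (simp add: algebra_simps)
lemma uu0: "uu 0 = y" and uu1: "uu 1 = z" unfolding uu_def ee_def by auto
lemma phi1: "phi s 1 = uu s" and phi0: "phi s 0 = x" unfolding phi_def aa_def by auto
lemma uu_H: "s \<in> {0..1} \<Longrightarrow> uu s \<in> H" using phi_H[of s 1] phi1 by simp
lemma aa_eq: "aa s = (y - x) + s *\<^sub>R ee" unfolding aa_def uu_def by simp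

lemma AA_cont: "s \<in> {0..1} \<Longrightarrow> continuous_on {0..1} (AA s)"
  unfolding AA_def phi_def
  by (intro continuous_intros continuous_on_compose2[OF cGam])
    (auto intro: phi_H[unfolded phi_def])

lemma AA_skew: "s \<in> {0..1} \<Longrightarrow> t \<in> {0..1} \<Longrightarrow> skew (AA s t)"
  unfolding AA_def using G_skew phi_H by blast

definition "PP s = (SOME P. P 1 = id_blinfun \<and> continuous_on {0..1} P \<and>
    (\<forall>t\<in>{0..1}. (P has_vector_derivative - (AA s t o\<^sub>L P t)) (at t within {0..1})))"
definition "SS s = (SOME S. S 1 = id_blinfun \<and> continuous_on {0..1} S \<and>
    (\<forall>t\<in>{0..1}. (S has_vector_derivative (S t o\<^sub>L AA s t)) (at t within {0..1})))"

lemma PP: assumes "s \<in> {0..1}"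
  shows "PP s 1 = id_blinfun" "continuous_on {0..1} (PP s)"
    "\<And>t. t \<in> {0..1} \<Longrightarrow> (PP s has_vector_derivative - (AA s t o\<^sub>L PP s t)) (at t within {0..1})"
proof -
  have "\<exists>P. P 1 = id_blinfun \<and> continuous_on {0..1} P \<and>
    (\<forall>t\<in>{0..1}. (P has_vector_derivative - (AA s t o\<^sub>L P t)) (at t within {0..1}))"
    by (rule transp_exists[OF AA_cont[OF assms]])
  from someI_ex[OF this] show "PP s 1 = id_blinfun" "continuous_on {0..1} (PP s)"
    "\<And>t. t \<in> {0..1} \<Longrightarrow> (PP s has_vector_derivative - (AA s t o\<^sub>L PP s t)) (at t within {0..1})"
    unfolding PP_def by blast+
qed

lemma SS: assumes "s \<in> {0..1}"
  shows "SS s 1 = id_blinfun" "continuous_on {0..1} (SS s)"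
    "\<And>t. t \<in> {0..1} \<Longrightarrow> (SS s has_vector_derivative (SS s t o\<^sub>L AA s t)) (at t within {0..1})"
proof -
  have "continuous_on {0..1} (\<lambda>t. cR (AA s t))" by (rule cR_cont[OF AA_cont[OF assms]])
  from ode_exists_bwd[OF this, of id_blinfun]
  have "\<exists>S. S 1 = id_blinfun \<and> continuous_on {0..1} S \<and>
    (\<forall>t\<in>{0..1}. (S has_vector_derivative (S t o\<^sub>L AA s t)) (at t within {0..1}))" by simp
  from someI_ex[OF this] show "SS s 1 = id_blinfun" "continuous_on {0..1} (SS s)"
    "\<And>t. t \<in> {0..1} \<Longrightarrow> (SS s has_vector_derivative (SS s t o\<^sub>L AA s t)) (at t within {0..1})"
    unfolding SS_def by blast+
qed

lemma PP_norm: "s \<in> {0..1} \<Longrightarrow> t \<in> {0..1} \<Longrightarrow> norm (PP s t) \<le> 1"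
  by (rule norm_le1, rule transp_isometry[OF AA_skew PP(3) PP(1)]) auto
lemma SS_norm: "s \<in> {0..1} \<Longrightarrow> t \<in> {0..1} \<Longrightarrow> norm (SS s t) \<le> 1"
  by (rule norm_le1, rule transp_inverse(3)[OF AA_skew PP(3) PP(1) SS(3) SS(1)]) auto

lemma Theta_eq: assumes s: "s \<in> {0..1}" shows "transport \<Gamma> x (uu s) = PP s 0"
proof -
  obtain P where ipt: "is_parallel_transport \<Gamma> x (uu s) P" and T: "transport \<Gamma> x (uu s) = P 0"
    using transport_facts[OF cvx cGam G_skew xH uu_H[OF s]] by blast
  have "P 0 = PP s 0"
  proof (rule transp_unique[OF AA_skew[OF s] _ PP(3)[OF s]])
    show "(P has_vector_derivative - (AA s t o\<^sub>L P t)) (at t within {0..1})" if "t \<in> {0..1}" for t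
      using ipt_deriv[OF ipt that] unfolding seg_phi AA_def aa_def .
    show "P 1 = PP s 1" using ipt PP(1)[OF s] unfolding is_parallel_transport_def by simp
  qed (use s in auto)
  then show ?thesis using T by simp
qed

end

context tri begin

lemma unif_Gamma:
  assumes e: "\<epsilon> > 0"
  shows "\<exists>d>0. \<forall>q0\<in>TT. \<forall>q1\<in>TT. norm (q1 - q0) < d \<longrightarrow>
     norm (\<Gamma> q1 - \<Gamma> q0 - DG q0 (q1 - q0)) \<le> \<epsilon> * norm (q1 - q0) \<and> norm (\<Gamma> q1 - \<Gamma> q0) \<le> \<epsilon>"
proof -
  have uD: "uniformly_continuous_on TT DG"
    by (rule compact_uniformly_continuous[OF continuous_on_subset[OF G_cont TT_sub] TT_compact])
  have uG: "uniformly_continuous_on TT \<Gamma>"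
    by (rule compact_uniformly_continuous[OF continuous_on_subset[OF cGam TT_sub] TT_compact])
  obtain d1 where d1: "d1 > 0" and hd1: "\<And>q q'. q \<in> TT \<Longrightarrow> q' \<in> TT \<Longrightarrow> dist q' q < d1 \<Longrightarrow> dist (DG q') (DG q) < \<epsilon>"
    using uD e unfolding uniformly_continuous_on_def by metis
  obtain d2 where d2: "d2 > 0" and hd2: "\<And>q q'. q \<in> TT \<Longrightarrow> q' \<in> TT \<Longrightarrow> dist q' q < d2 \<Longrightarrow> dist (\<Gamma> q') (\<Gamma> q) < \<epsilon>"
    using uG e unfolding uniformly_continuous_on_def by metis
  show ?thesis
  proof (intro exI[of _ "min d1 d2"] conjI ballI impI)
    show "min d1 d2 > 0" using d1 d2 by simp
    fix q0 q1 assume q0: "q0 \<in> TT" and q1: "q1 \<in> TT" and dq: "norm (q1 - q0) < min d1 d2"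
    show "norm (\<Gamma> q1 - \<Gamma> q0) \<le> \<epsilon>"
      using hd2[OF q0 q1] dq by (simp add: dist_norm less_imp_le)
    have segT: "closed_segment q0 q1 \<subseteq> TT" by (rule closed_segment_subset[OF q0 q1 TT_convex])
    have "norm (\<Gamma> q1 - \<Gamma> q0 - DG q0 (q1 - q0)) \<le> norm (q1 - q0) * \<epsilon>"
    proof (rule differentiable_bound_linearization[where S="closed_segment q0 q1" and f'="\<lambda>q. blinfun_apply (DG q)"])
      show "q0 + t *\<^sub>R (q1 - q0) \<in> closed_segment q0 q1" if "t \<in> {0..1}" for t
        using that unfolding closed_segment_def by (auto intro!: exI[of _ t] simp: algebra_simps)
      show "(\<Gamma> has_derivative blinfun_apply (DG q)) (at q within closed_segment q0 q1)"
        if "q \<in> closed_segment q0 q1" for q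
        using G_deriv[of q] that segT TT_sub by (meson has_derivative_subset subsetD order_trans)
      show "q0 \<in> closed_segment q0 q1" by simp
      show "onorm (blinfun_apply (DG q) - blinfun_apply (DG q0)) \<le> \<epsilon>"
        if q: "q \<in> closed_segment q0 q1" for q
      proof -
        have "blinfun_apply (DG q) - blinfun_apply (DG q0) = blinfun_apply (DG q - DG q0)"
          by (simp add: fun_eq_iff blinfun.diff_left)
        then have "onorm (blinfun_apply (DG q) - blinfun_apply (DG q0)) = norm (DG q - DG q0)"
          by (simp add: norm_blinfun.rep_eq)
        also have "\<dots> < \<epsilon>"
        proof -
          have "dist q q0 \<le> dist q0 q1" using dist_in_closed_segment[OF q] by blast
          then have "dist q q0 < d1" using dq by (simp add: dist_norm norm_minus_commute)
          then show ?thesis using hd1[OF q0 subsetD[OF segT q]] by (simp add: dist_norm)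
        qed
        finally show ?thesis by simp
      qed
    qed
    then show "norm (\<Gamma> q1 - \<Gamma> q0 - DG q0 (q1 - q0)) \<le> \<epsilon> * norm (q1 - q0)" by (simp add: mult.commute)
  qed
qed

end

context tri begin

lemma aa_norm: "s \<in> {0..1} \<Longrightarrow> norm (aa s) \<le> norm (y - x) + norm ee"
proof -
  assume s: "s \<in> {0..1}"
  have "norm (aa s) \<le> norm (y - x) + norm (s *\<^sub>R ee)" unfolding aa_eq by (rule norm_triangle_ineq)
  also have "norm (s *\<^sub>R ee) \<le> norm ee" using s by (simp add: mult_left_le_one_le)
  finally show ?thesis by simp
qed

lemma Gam_bounded: obtains G0 where "G0 \<ge> 0" "\<And>q. q \<in> TT \<Longrightarrow> norm (\<Gamma> q) \<le> G0"
proof -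
  have "compact (\<Gamma> ` TT)"
    by (rule compact_continuous_image[OF continuous_on_subset[OF cGam TT_sub] TT_compact])
  then obtain G where "\<And>q. q \<in> TT \<Longrightarrow> norm (\<Gamma> q) \<le> G"
    by (meson bounded_iff compact_imp_bounded image_eqI)
  then show ?thesis using that[of "max G 0"] by (meson max.cobounded2 max.coboundedI1)
qed

lemma phi_diff: "phi s t - phi s0 t = (t * (s - s0)) *\<^sub>R ee"
  unfolding phi_def aa_eq by (simp add: algebra_simps)

lemma AA_id1: "AA s t - AA s0 t - (s - s0) *\<^sub>R dAA s0 t =
    (\<Gamma> (phi s t) - \<Gamma> (phi s0 t) - DG (phi s0 t) (phi s t - phi s0 t)) (aa s0)
    + (s - s0) *\<^sub>R ((\<Gamma> (phi s t) - \<Gamma> (phi s0 t)) ee)"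
proof -
  have a: "aa s = aa s0 + (s - s0) *\<^sub>R ee" unfolding aa_eq by (simp add: algebra_simps)
  show ?thesis unfolding AA_def dAA_def phi_diff a
    by (simp add: blinfun.bilinear_simps algebra_simps)
qed

lemma AA_id2: "AA s t - AA s0 t =
    (\<Gamma> (phi s t) - \<Gamma> (phi s0 t)) (aa s0) + (s - s0) *\<^sub>R (\<Gamma> (phi s t) ee)"
proof -
  have a: "aa s = aa s0 + (s - s0) *\<^sub>R ee" unfolding aa_eq by (simp add: algebra_simps)
  show ?thesis unfolding AA_def a
    by (simp add: blinfun.bilinear_simps algebra_simps)
qed

lemma AA_lin:
  assumes s0: "s0 \<in> {0..1}" and e: "\<epsilon> > 0"
  shows "\<exists>d>0. \<forall>s\<in>{0..1}. \<bar>s - s0\<bar> < d \<longrightarrow> (\<forall>t\<in>{0..1}.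
     norm (AA s t - AA s0 t - (s - s0) *\<^sub>R dAA s0 t) \<le> \<epsilon> * \<bar>s - s0\<bar> \<and> norm (AA s t - AA s0 t) \<le> \<epsilon>)"
proof -
  define Ra where "Ra = norm (y - x) + norm ee"
  have Ra0: "Ra \<ge> 0" unfolding Ra_def by simp
  obtain G0 where G00: "G0 \<ge> 0" and G0: "\<And>q. q \<in> TT \<Longrightarrow> norm (\<Gamma> q) \<le> G0" using Gam_bounded by metis
  define E where "E = norm ee"
  have E0: "E \<ge> 0" unfolding E_def by simp
  define e1 where "e1 = \<epsilon> / (2 * (E + 1) * (Ra + 1))"
  have e1: "e1 > 0" unfolding e1_def using e E0 Ra0 by simp
  obtain d1 where d1: "d1 > 0" and hd1: "\<And>q0 q1. q0\<in>TT \<Longrightarrow> q1\<in>TT \<Longrightarrow> norm (q1 - q0) < d1 \<Longrightarrow>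
     norm (\<Gamma> q1 - \<Gamma> q0 - DG q0 (q1 - q0)) \<le> e1 * norm (q1 - q0) \<and> norm (\<Gamma> q1 - \<Gamma> q0) \<le> e1"
    using unif_Gamma[OF e1] by blast
  define d where "d = min (d1 / (E + 1)) (\<epsilon> / (2 * (E + 1) * (G0 + 1)))"
  have d: "d > 0" unfolding d_def using d1 e E0 G00 by simp
  show ?thesis
  proof (intro exI[of _ d] conjI ballI impI d)
    fix s t :: real assume s: "s \<in> {0..1}" and sd: "\<bar>s - s0\<bar> < d" and t: "t \<in> {0..1}"
    define h where "h = s - s0"
    define q0 where "q0 = phi s0 t"
    define q1 where "q1 = phi s t"
    have q0T: "q0 \<in> TT" unfolding q0_def using phi_TT s0 t by blast
    have q1T: "q1 \<in> TT" unfolding q1_def using phi_TT s t by blast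
    have nq: "norm (q1 - q0) \<le> \<bar>h\<bar> * E"
    proof -
      have "norm (q1 - q0) = \<bar>t\<bar> * \<bar>h\<bar> * E" unfolding q1_def q0_def phi_diff h_def E_def by (simp add: abs_mult)
      also have "\<dots> \<le> 1 * \<bar>h\<bar> * E" using t E0 by (intro mult_right_mono) auto
      finally show ?thesis by simp
    qed
    have hE: "\<bar>h\<bar> * E < d1"
    proof -
      have "\<bar>h\<bar> * E \<le> \<bar>h\<bar> * (E + 1)" by (simp add: mult_left_mono)
      also have "\<dots> < d * (E + 1)" using sd E0 unfolding h_def by (intro mult_strict_right_mono) auto
      also have "\<dots> \<le> d1 / (E + 1) * (E + 1)" unfolding d_def using E0 by (intro mult_right_mono) auto
      also have "\<dots> = d1" using E0 by simp
      finally show ?thesis .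
    qed
    have H: "norm (\<Gamma> q1 - \<Gamma> q0 - DG q0 (q1 - q0)) \<le> e1 * norm (q1 - q0)" "norm (\<Gamma> q1 - \<Gamma> q0) \<le> e1"
      using hd1[OF q0T q1T] nq hE by auto
    have na: "norm (aa s0) \<le> Ra" unfolding Ra_def by (rule aa_norm[OF s0])
    have "norm (AA s t - AA s0 t - (s - s0) *\<^sub>R dAA s0 t)
        \<le> norm ((\<Gamma> q1 - \<Gamma> q0 - DG q0 (q1 - q0)) (aa s0)) + norm (h *\<^sub>R ((\<Gamma> q1 - \<Gamma> q0) ee))"
      unfolding AA_id1 q0_def q1_def h_def by (rule norm_triangle_ineq)
    also have "\<dots> \<le> norm (\<Gamma> q1 - \<Gamma> q0 - DG q0 (q1 - q0)) * norm (aa s0) + \<bar>h\<bar> * (norm (\<Gamma> q1 - \<Gamma> q0) * E)"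
      unfolding E_def by (intro add_mono norm_blinfun) (simp add: norm_blinfun mult_left_mono)
    also have "\<dots> \<le> (e1 * (\<bar>h\<bar> * E)) * Ra + \<bar>h\<bar> * (e1 * E)"
    proof -
      have "norm (\<Gamma> q1 - \<Gamma> q0 - DG q0 (q1 - q0)) \<le> e1 * (\<bar>h\<bar> * E)"
        using H(1) nq e1 by (meson mult_left_mono less_imp_le order_trans)
      then show ?thesis using H nq na e1 E0 by (intro add_mono mult_mono mult_left_mono) auto
    qed
    also have "\<dots> \<le> e1 * \<bar>h\<bar> * ((E + 1) * (Ra + 1))"
      using e1 E0 Ra0 by (simp add: algebra_simps mult_nonneg_nonneg)
    also have "\<dots> = \<epsilon> / 2 * \<bar>h\<bar>"
    proof -
      have pos: "(E + 1) * (Ra + 1) > 0" using E0 Ra0 by simp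
      have eq: "e1 * ((E + 1) * (Ra + 1)) = \<epsilon> / 2" unfolding e1_def using E0 Ra0
        by (simp add: divide_simps)
      have "e1 * \<bar>h\<bar> * ((E + 1) * (Ra + 1)) = \<bar>h\<bar> * (e1 * ((E + 1) * (Ra + 1)))"
        by (simp only: mult_ac)
      then show ?thesis using eq by simp
    qed
    also have "\<dots> \<le> \<epsilon> * \<bar>s - s0\<bar>" unfolding h_def using e by simp
    finally show "norm (AA s t - AA s0 t - (s - s0) *\<^sub>R dAA s0 t) \<le> \<epsilon> * \<bar>s - s0\<bar>" .
    have "norm (AA s t - AA s0 t) \<le> norm ((\<Gamma> q1 - \<Gamma> q0) (aa s0)) + norm (h *\<^sub>R (\<Gamma> q1 ee))"
      unfolding AA_id2 q0_def q1_def h_def by (rule norm_triangle_ineq)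
    also have "\<dots> \<le> norm (\<Gamma> q1 - \<Gamma> q0) * norm (aa s0) + \<bar>h\<bar> * (norm (\<Gamma> q1) * E)"
      unfolding E_def by (intro add_mono norm_blinfun) (simp add: norm_blinfun mult_left_mono)
    also have "\<dots> \<le> e1 * Ra + d * (G0 * E)"
      using H na e1 G0[OF q1T] sd E0 G00 unfolding h_def
      by (intro add_mono mult_mono) (auto intro: mult_mono)
    also have "e1 * Ra \<le> \<epsilon> / 2"
    proof -
      have "e1 * Ra = \<epsilon> / 2 * (Ra / ((E + 1) * (Ra + 1)))" unfolding e1_def by (simp add: field_simps)
      also have "\<dots> \<le> \<epsilon> / 2 * 1"
      proof (rule mult_left_mono)
        have "Ra \<le> (E + 1) * (Ra + 1)" using E0 Ra0 by (simp add: algebra_simps)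
        then show "Ra / ((E + 1) * (Ra + 1)) \<le> 1" using E0 Ra0 by (simp add: divide_le_eq)
      qed (use e in auto)
      finally show ?thesis by simp
    qed
    also have "d * (G0 * E) \<le> \<epsilon> / 2"
    proof -
      have "d * (G0 * E) \<le> \<epsilon> / (2 * (E + 1) * (G0 + 1)) * (G0 * E)"
        unfolding d_def using G00 E0 by (intro mult_right_mono) auto
      also have "\<dots> = \<epsilon> / 2 * ((G0 * E) / ((E + 1) * (G0 + 1)))" by (simp add: field_simps)
      also have "\<dots> \<le> \<epsilon> / 2 * 1"
      proof (rule mult_left_mono)
        have "G0 * E \<le> (E + 1) * (G0 + 1)" using E0 G00 by (simp add: algebra_simps)
        then show "G0 * E / ((E + 1) * (G0 + 1)) \<le> 1" using E0 G00 by (simp add: divide_le_eq)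
      qed (use e in auto)
      finally show ?thesis by simp
    qed
    finally show "norm (AA s t - AA s0 t) \<le> \<epsilon>" by simp
  qed
qed

end

context tri begin

definition "JJ s = integral {0..1} (\<lambda>t. SS s t o\<^sub>L (dAA s t o\<^sub>L PP s t))"

lemma phi_cont: "continuous_on S (phi s)"
  unfolding phi_def by (intro continuous_intros)

lemma dAA_cont: assumes s: "s \<in> {0..1}" shows "continuous_on {0..1} (dAA s)"
proof -
  have c1: "continuous_on {0..1} (\<lambda>t. DG (phi s t))"
    by (rule continuous_on_compose2[OF G_cont phi_cont]) (use phi_H s in auto)
  have c2: "continuous_on {0..1} (\<lambda>t. \<Gamma> (phi s t))"
    by (rule continuous_on_compose2[OF cGam phi_cont]) (use phi_H s in auto)
  show ?thesis unfolding dAA_def using c1 c2 by (intro continuous_intros)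
qed

lemma dAA_bounded: assumes s: "s \<in> {0..1}" obtains K0 where "K0 \<ge> 0" "\<And>t. t \<in> {0..1} \<Longrightarrow> norm (dAA s t) \<le> K0"
proof -
  have "compact (dAA s ` {0..1})" by (rule compact_continuous_image[OF dAA_cont[OF s] compact_Icc])
  then obtain G where "\<And>t. t \<in> {0..1} \<Longrightarrow> norm (dAA s t) \<le> G"
    by (meson bounded_iff compact_imp_bounded image_eqI)
  then show ?thesis using that[of "max G 0"] by (meson max.cobounded2 max.coboundedI1)
qed

lemma JJ_int: assumes s: "s \<in> {0..1}"
  shows "((\<lambda>t. SS s t o\<^sub>L (dAA s t o\<^sub>L PP s t)) has_integral JJ s) {0..1}"
proof -
  have "continuous_on {0..1} (\<lambda>t. SS s t o\<^sub>L (dAA s t o\<^sub>L PP s t))"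
    using SS(2)[OF s] PP(2)[OF s] dAA_cont[OF s] by (intro continuous_intros)
  then show ?thesis unfolding JJ_def
    using integrable_continuous_real by (blast intro: integrable_integral)
qed

lemma Theta_deriv: assumes s0: "s0 \<in> {0..1}"
  shows "((\<lambda>s. PP s 0) has_vector_derivative (PP s0 0 o\<^sub>L JJ s0)) (at s0 within {0..1})"
  unfolding has_vector_derivative_def has_derivative_within_alt
proof (intro conjI allI impI bounded_linear_scaleR_left)
  fix \<epsilon> :: real assume e: "\<epsilon> > 0"
  obtain K0 where K00: "K0 \<ge> 0" and K0: "\<And>t. t \<in> {0..1} \<Longrightarrow> norm (dAA s0 t) \<le> K0"
    using dAA_bounded[OF s0] by metis
  define e' where "e' = \<epsilon> / (2 * (K0 + 1))"
  have e': "e' > 0" unfolding e'_def using e K00 by simp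
  obtain d where d: "d > 0" and hd: "\<And>s. s\<in>{0..1} \<Longrightarrow> \<bar>s - s0\<bar> < d \<Longrightarrow> (\<forall>t\<in>{0..1}.
     norm (AA s t - AA s0 t - (s - s0) *\<^sub>R dAA s0 t) \<le> e' * \<bar>s - s0\<bar> \<and> norm (AA s t - AA s0 t) \<le> e')"
    using AA_lin[OF s0 e'] by blast
  show "\<exists>d>0. \<forall>s\<in>{0..1}. norm (s - s0) < d \<longrightarrow>
      norm (PP s 0 - PP s0 0 - (s - s0) *\<^sub>R (PP s0 0 o\<^sub>L JJ s0)) \<le> \<epsilon> * norm (s - s0)"
  proof (intro exI[of _ d] conjI ballI impI d)
    fix s assume s: "s \<in> {0..1}" and sd: "norm (s - s0) < d"
    define h where "h = s - s0"
    have H: "\<And>t. t \<in> {0..1} \<Longrightarrow> norm (AA s t - AA s0 t - h *\<^sub>R dAA s0 t) \<le> e' * \<bar>h\<bar>"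
      "\<And>t. t \<in> {0..1} \<Longrightarrow> norm (AA s t - AA s0 t) \<le> e'"
      using hd[OF s] sd unfolding h_def by auto
    note D = duhamel[OF AA_skew[OF s0] PP(3)[OF s0] PP(1)[OF s0] PP(3)[OF s] PP(1)[OF s] SS(3)[OF s0] SS(1)[OF s0], of 0]
    have PPd: "norm (PP s t - PP s0 t) \<le> e'" if t: "t \<in> {0..1}" for t
      by (rule duhamel_bound[OF AA_skew[OF s0] AA_skew[OF s] PP(3)[OF s0] PP(1)[OF s0] PP(3)[OF s] PP(1)[OF s] SS(3)[OF s0] SS(1)[OF s0] t H(2)])
    define I1 where "I1 = (SS s0 0 o\<^sub>L PP s 0) - id_blinfun"
    have I1: "((\<lambda>t. SS s0 t o\<^sub>L ((AA s t - AA s0 t) o\<^sub>L PP s t)) has_integral I1) {0..1}"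
      using D(1) unfolding I1_def by simp
    have eq1: "PP s 0 - PP s0 0 = PP s0 0 o\<^sub>L I1" using D(2) unfolding I1_def by simp
    have int: "((\<lambda>t. SS s0 t o\<^sub>L (((AA s t - AA s0 t) o\<^sub>L PP s t) - h *\<^sub>R (dAA s0 t o\<^sub>L PP s0 t)))
        has_integral (I1 - h *\<^sub>R JJ s0)) {0..1}"
    proof -
      have "((\<lambda>t. (SS s0 t o\<^sub>L ((AA s t - AA s0 t) o\<^sub>L PP s t)) - h *\<^sub>R (SS s0 t o\<^sub>L (dAA s0 t o\<^sub>L PP s0 t)))
        has_integral (I1 - h *\<^sub>R JJ s0)) {0..1}"
        by (intro has_integral_diff I1 has_integral_cmul JJ_int s0)
      moreover have "(\<lambda>t. (SS s0 t o\<^sub>L ((AA s t - AA s0 t) o\<^sub>L PP s t)) - h *\<^sub>R (SS s0 t o\<^sub>L (dAA s0 t o\<^sub>L PP s0 t)))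
          = (\<lambda>t. SS s0 t o\<^sub>L (((AA s t - AA s0 t) o\<^sub>L PP s t) - h *\<^sub>R (dAA s0 t o\<^sub>L PP s0 t)))"
        by (intro ext blinfun_eqI) (simp add: blinfun.bilinear_simps)
      ultimately show ?thesis by simp
    qed
    have "norm (I1 - h *\<^sub>R JJ s0) \<le> (\<epsilon> * \<bar>h\<bar>) * (1 - 0)"
    proof (rule int_bound01[OF _ int])
      show "0 \<le> \<epsilon> * \<bar>h\<bar>" using e by simp
      fix t :: real assume t: "t \<in> {0..1}"
      have eqX: "((AA s t - AA s0 t) o\<^sub>L PP s t) - h *\<^sub>R (dAA s0 t o\<^sub>L PP s0 t)
          = ((AA s t - AA s0 t - h *\<^sub>R dAA s0 t) o\<^sub>L PP s t) + h *\<^sub>R (dAA s0 t o\<^sub>L (PP s t - PP s0 t))"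
        by (rule blinfun_eqI) (simp add: blinfun.bilinear_simps algebra_simps)
      have "norm (((AA s t - AA s0 t) o\<^sub>L PP s t) - h *\<^sub>R (dAA s0 t o\<^sub>L PP s0 t))
          \<le> norm ((AA s t - AA s0 t - h *\<^sub>R dAA s0 t) o\<^sub>L PP s t) + norm (h *\<^sub>R (dAA s0 t o\<^sub>L (PP s t - PP s0 t)))"
        unfolding eqX by (rule norm_triangle_ineq)
      also have "\<dots> \<le> norm (AA s t - AA s0 t - h *\<^sub>R dAA s0 t) * norm (PP s t)
          + \<bar>h\<bar> * (norm (dAA s0 t) * norm (PP s t - PP s0 t))"
        by (intro add_mono norm_blinfun_compose) (simp add: norm_blinfun_compose mult_left_mono)
      also have "\<dots> \<le> (e' * \<bar>h\<bar>) * 1 + \<bar>h\<bar> * (K0 * e')"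
        using H(1)[OF t] PP_norm[OF s t] K0[OF t] PPd[OF t] K00 e'
        by (intro add_mono mult_mono mult_left_mono) auto
      also have "\<dots> = \<bar>h\<bar> * (e' * (K0 + 1))" by (simp add: algebra_simps)
      also have "e' * (K0 + 1) = \<epsilon> / 2" unfolding e'_def using K00 by (simp add: divide_simps)
      also have "\<bar>h\<bar> * (\<epsilon> / 2) \<le> \<epsilon> * \<bar>h\<bar>" using e by simp
      finally have X: "norm (((AA s t - AA s0 t) o\<^sub>L PP s t) - h *\<^sub>R (dAA s0 t o\<^sub>L PP s0 t)) \<le> \<epsilon> * \<bar>h\<bar>" .
      have "norm (SS s0 t o\<^sub>L (((AA s t - AA s0 t) o\<^sub>L PP s t) - h *\<^sub>R (dAA s0 t o\<^sub>L PP s0 t)))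
          \<le> norm (SS s0 t) * norm (((AA s t - AA s0 t) o\<^sub>L PP s t) - h *\<^sub>R (dAA s0 t o\<^sub>L PP s0 t))"
        by (rule norm_blinfun_compose)
      also have "\<dots> \<le> 1 * (\<epsilon> * \<bar>h\<bar>)"
        using SS_norm[OF s0 t] X by (intro mult_mono) auto
      finally show "norm (SS s0 t o\<^sub>L (((AA s t - AA s0 t) o\<^sub>L PP s t) - h *\<^sub>R (dAA s0 t o\<^sub>L PP s0 t))) \<le> \<epsilon> * \<bar>h\<bar>"
        by simp
    qed simp
    have eq2: "PP s 0 - PP s0 0 - h *\<^sub>R (PP s0 0 o\<^sub>L JJ s0) = PP s0 0 o\<^sub>L (I1 - h *\<^sub>R JJ s0)"
      unfolding eq1 by (rule blinfun_eqI) (simp add: blinfun.bilinear_simps)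
    have "norm (PP s0 0 o\<^sub>L (I1 - h *\<^sub>R JJ s0)) \<le> norm (PP s0 0) * norm (I1 - h *\<^sub>R JJ s0)"
      by (rule norm_blinfun_compose)
    also have "\<dots> \<le> 1 * (\<epsilon> * \<bar>h\<bar>)"
      using PP_norm[OF s0, of 0] \<open>norm (I1 - h *\<^sub>R JJ s0) \<le> (\<epsilon> * \<bar>h\<bar>) * (1 - 0)\<close>
      by (intro mult_mono) auto
    finally show "norm (PP s 0 - PP s0 0 - (s - s0) *\<^sub>R (PP s0 0 o\<^sub>L JJ s0)) \<le> \<epsilon> * norm (s - s0)"
      using eq2 unfolding h_def by simp
  qed
qed

end

context tri begin

definition "KK s t = curvature \<Gamma> DG (phi s t) (t *\<^sub>R ee) (aa s)"
definition "CC s = integral {0..1} (\<lambda>t. SS s t o\<^sub>L (KK s t o\<^sub>L PP s t))"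

lemma DGphi_cont: "s \<in> {0..1} \<Longrightarrow> continuous_on {0..1} (\<lambda>t. DG (phi s t))"
  by (rule continuous_on_compose2[OF G_cont phi_cont]) (use phi_H in auto)
lemma Gphi_cont: "s \<in> {0..1} \<Longrightarrow> continuous_on {0..1} (\<lambda>t. \<Gamma> (phi s t))"
  by (rule continuous_on_compose2[OF cGam phi_cont]) (use phi_H in auto)

lemma CC_int: assumes s: "s \<in> {0..1}"
  shows "((\<lambda>t. SS s t o\<^sub>L (KK s t o\<^sub>L PP s t)) has_integral CC s) {0..1}"
proof -
  have "continuous_on {0..1} (\<lambda>t. SS s t o\<^sub>L (KK s t o\<^sub>L PP s t))"
    unfolding KK_def curvature_def
    using SS(2)[OF s] PP(2)[OF s] DGphi_cont[OF s] Gphi_cont[OF s] by (intro continuous_intros)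
  then show ?thesis unfolding CC_def
    using integrable_continuous_real by (blast intro: integrable_integral)
qed

lemma Gphi_deriv: assumes s: "s \<in> {0..1}" and t: "t \<in> {0..1}"
  shows "((\<lambda>t. \<Gamma> (phi s t)) has_vector_derivative DG (phi s t) (aa s)) (at t within {0..1})"
proof -
  have dphi: "(phi s has_derivative (\<lambda>h. h *\<^sub>R aa s)) (at t within {0..1})"
    unfolding phi_def[abs_def] by (auto intro!: derivative_eq_intros)
  have "((\<lambda>t. \<Gamma> (phi s t)) has_derivative (\<lambda>h. DG (phi s t) (h *\<^sub>R aa s))) (at t within {0..1})"
    by (rule has_derivative_in_compose2[OF G_deriv _ t dphi]) (use phi_H s in auto)
  then show ?thesis unfolding has_vector_derivative_def by (simp add: blinfun.scaleR_right)
qed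

lemma JJ_eq: assumes s: "s \<in> {0..1}" shows "JJ s = \<Gamma> (uu s) ee + CC s"
proof -
  define X where "X t = \<Gamma> (phi s t) (t *\<^sub>R ee)" for t
  define X' where "X' t = \<Gamma> (phi s t) ee + DG (phi s t) (aa s) (t *\<^sub>R ee)" for t
  define G where "G t = SS s t o\<^sub>L (X t o\<^sub>L PP s t)" for t
  define G' where "G' t = (SS s t o\<^sub>L ((X t o\<^sub>L - (AA s t o\<^sub>L PP s t)) + (X' t o\<^sub>L PP s t)))
      + ((SS s t o\<^sub>L AA s t) o\<^sub>L (X t o\<^sub>L PP s t))" for t
  have dX: "(X has_vector_derivative X' t) (at t within {0..1})" if t: "t \<in> {0..1}" for t
  proof -
    have d2: "((\<lambda>t. t *\<^sub>R ee) has_vector_derivative ee) (at t within {0..1})"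
      by (auto intro!: derivative_eq_intros)
    show ?thesis unfolding X_def[abs_def] X'_def
      using hvd_apply[OF Gphi_deriv[OF s t] d2] by simp
  qed
  have dG: "(G has_vector_derivative G' t) (at t within {0..1})" if t: "t \<in> {0..1}" for t
    unfolding G_def[abs_def] G'_def
    by (rule hvd_compose[OF SS(3)[OF s t] hvd_compose[OF dX[OF t] PP(3)[OF s t]]])
  have FTC: "(G' has_integral (G 1 - G 0)) {0..1}"
    by (rule fundamental_theorem_of_calculus) (use dG in auto)
  have G1: "G 1 = \<Gamma> (uu s) ee"
    unfolding G_def X_def using SS(1)[OF s] PP(1)[OF s] by (intro blinfun_eqI) (simp add: phi1)
  have G0: "G 0 = 0" unfolding G_def X_def by (intro blinfun_eqI) simp
  have pt: "SS s t o\<^sub>L (dAA s t o\<^sub>L PP s t) = G' t + (SS s t o\<^sub>L (KK s t o\<^sub>L PP s t))" for t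
    unfolding G'_def X_def X'_def KK_def curvature_def dAA_def AA_def
    by (rule blinfun_eqI) (simp add: blinfun.bilinear_simps)
  have "((\<lambda>t. SS s t o\<^sub>L (dAA s t o\<^sub>L PP s t)) has_integral (\<Gamma> (uu s) ee + CC s)) {0..1}"
    unfolding pt using has_integral_add[OF FTC CC_int[OF s]] G1 G0 by simp
  then show ?thesis using JJ_int[OF s] by (rule has_integral_unique[symmetric])
qed

end

context tri begin

lemma holonomy_bound:
  assumes B: "\<And>s. s \<in> {0..1} \<Longrightarrow> norm (CC s) \<le> B"
  shows "norm (transport \<Gamma> x z - (transport \<Gamma> x y o\<^sub>L transport \<Gamma> y z)) \<le> B"
proof -
  obtain Q where iptQ: "is_parallel_transport \<Gamma> y z Q" and TQ: "transport \<Gamma> y z = Q 0"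
    using transport_facts[OF cvx cGam G_skew yH zH] by blast
  have dQ: "(Q has_vector_derivative - (\<Gamma> (uu t) ee o\<^sub>L Q t)) (at t within {0..1})" if "t \<in> {0..1}" for t
    using ipt_deriv[OF iptQ that] unfolding seg_u ee_def .
  have Q1: "Q 1 = id_blinfun" using iptQ unfolding is_parallel_transport_def by simp
  have skQ: "skew (\<Gamma> (uu t) ee)" if "t \<in> {0..1}" for t using G_skew uu_H that by blast
  have Qn: "norm (Q t) \<le> 1" if "t \<in> {0..1}" for t
    by (rule norm_le1, rule transp_isometry[OF skQ dQ Q1 that]) auto
  define M where "M s = PP s 0 o\<^sub>L Q s" for s
  define M' where "M' s = PP s 0 o\<^sub>L (CC s o\<^sub>L Q s)" for s
  have dM: "(M has_vector_derivative M' s) (at s within {0..1})" if s: "s \<in> {0..1}" for s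
  proof -
    have "(M has_vector_derivative ((PP s 0 o\<^sub>L - (\<Gamma> (uu s) ee o\<^sub>L Q s)) + ((PP s 0 o\<^sub>L JJ s) o\<^sub>L Q s)))
        (at s within {0..1})"
      unfolding M_def[abs_def] by (rule hvd_compose[OF Theta_deriv[OF s] dQ[OF s]])
    moreover have "(PP s 0 o\<^sub>L - (\<Gamma> (uu s) ee o\<^sub>L Q s)) + ((PP s 0 o\<^sub>L JJ s) o\<^sub>L Q s) = M' s"
      unfolding M'_def JJ_eq[OF s] by (rule blinfun_eqI) (simp add: blinfun.bilinear_simps)
    ultimately show ?thesis by simp
  qed
  have "(M' has_integral (M 1 - M 0)) {0..1}"
    by (rule fundamental_theorem_of_calculus) (use dM in auto)
  then have "norm (M 1 - M 0) \<le> B * (1 - 0)"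
  proof (rule int_bound01[rotated])
    fix s :: real assume s: "s \<in> {0..1}"
    have "norm (M' s) \<le> norm (PP s 0) * (norm (CC s) * norm (Q s))"
      unfolding M'_def by (meson mult_left_mono norm_blinfun_compose norm_ge_zero order_trans)
    also have "\<dots> \<le> 1 * (B * 1)"
      using PP_norm[OF s, of 0] B[OF s] Qn[OF s] order_trans[OF norm_ge_zero B[OF s]] by (intro mult_mono) auto
    finally show "norm (M' s) \<le> B" by simp
  next
    show "0 \<le> B" using B[of 0] norm_ge_zero[of "CC 0"] by (meson atLeastAtMost_iff order_trans zero_le_one order_refl)
  qed simp
  moreover have "M 1 = transport \<Gamma> x z"
    unfolding M_def Q1 using Theta_eq[of 1] uu1 by (intro blinfun_eqI) simp
  moreover have "M 0 = transport \<Gamma> x y o\<^sub>L transport \<Gamma> y z"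
    unfolding M_def TQ using Theta_eq[of 0] uu0 by simp
  ultimately show ?thesis by simp
qed

end

definition wedge :: "'a::real_inner \<Rightarrow> 'a \<Rightarrow> real" where
  "wedge v w = sqrt ((norm v)\<^sup>2 * (norm w)\<^sup>2 - (inner v w)\<^sup>2)"

lemma gram_nonneg: "0 \<le> (norm v)\<^sup>2 * (norm w)\<^sup>2 - (inner v w)\<^sup>2"
proof -
  have "\<bar>inner v w\<bar> \<le> norm v * norm w" by (rule Cauchy_Schwarz_ineq2)
  then have "(inner v w)\<^sup>2 \<le> (norm v * norm w)\<^sup>2"
    by (metis abs_ge_zero power2_abs power_mono)
  moreover have "(norm v * norm w)\<^sup>2 = (norm v)\<^sup>2 * (norm w)\<^sup>2" by (rule power_mult_distrib)
  ultimately show ?thesis by linarith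
qed

lemma wedge_nonneg: "0 \<le> wedge v w" unfolding wedge_def using gram_nonneg[of v w] by simp

lemma wedge_scale: "wedge (t *\<^sub>R v) w = \<bar>t\<bar> * wedge v w"
proof -
  have "(norm (t *\<^sub>R v))\<^sup>2 * (norm w)\<^sup>2 - (inner (t *\<^sub>R v) w)\<^sup>2 = t\<^sup>2 * ((norm v)\<^sup>2 * (norm w)\<^sup>2 - (inner v w)\<^sup>2)"
    by (simp add: power_mult_distrib algebra_simps)
  then show ?thesis unfolding wedge_def by (simp add: real_sqrt_mult)
qed

lemma wedge_shift: "wedge v (w + c *\<^sub>R v) = wedge v w"
  unfolding wedge_def power2_norm_eq_inner
  by (simp add: inner_add_left inner_add_right inner_commute algebra_simps power2_eq_square)

lemma wedge_sym: "wedge v w = wedge w v"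
  unfolding wedge_def by (simp add: inner_commute mult.commute)

lemma wedge_perp:
  assumes "v \<noteq> 0"
  shows "norm v * norm (w - (inner v w / (norm v)\<^sup>2) *\<^sub>R v) = wedge v w"
proof -
  define c where "c = inner v w / (norm v)\<^sup>2"
  have nv: "(norm v)\<^sup>2 > 0" using assms by simp
  have "(norm (w - c *\<^sub>R v))\<^sup>2 = (norm w)\<^sup>2 - 2 * c * inner v w + c\<^sup>2 * (norm v)\<^sup>2"
    by (simp only: power2_norm_eq_inner) (simp add: inner_diff_left inner_diff_right inner_commute algebra_simps power2_eq_square)
  also have "\<dots> = (norm w)\<^sup>2 - (inner v w)\<^sup>2 / (norm v)\<^sup>2"
    unfolding c_def using nv by (simp add: field_simps power2_eq_square)
  finally have "(norm v)\<^sup>2 * (norm (w - c *\<^sub>R v))\<^sup>2 = (norm v)\<^sup>2 * (norm w)\<^sup>2 - (inner v w)\<^sup>2"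
    using nv by (simp add: field_simps)
  then have "(norm v * norm (w - c *\<^sub>R v))\<^sup>2 = (wedge v w)\<^sup>2"
    unfolding wedge_def using gram_nonneg[of v w] by (simp add: power_mult_distrib)
  then show ?thesis unfolding c_def[symmetric]
    using wedge_nonneg[of v w] by (simp add: power2_eq_iff_nonneg)
qed

lemma curv_self: "curvature \<Gamma> DG p v v = 0"
  unfolding curvature_def by simp

lemma curv_lin: "curvature \<Gamma> DG p v (w - c *\<^sub>R v) = curvature \<Gamma> DG p v w - c *\<^sub>R curvature \<Gamma> DG p v v"
  unfolding curvature_def by (rule blinfun_eqI) (simp add: blinfun.bilinear_simps algebra_simps)

lemma curv_wedge:
  assumes c0: "c \<ge> 0" and c: "\<And>v w. norm (curvature \<Gamma> DG p v w) \<le> c * (norm v * norm w)"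
  shows "norm (curvature \<Gamma> DG p v w) \<le> c * wedge v w"
proof (cases "v = 0")
  case True
  have "curvature \<Gamma> DG p 0 w = 0" unfolding curvature_def by (rule blinfun_eqI) (simp add: blinfun.bilinear_simps)
  then show ?thesis using True c0 wedge_nonneg[of 0 w] by simp
next
  case False
  define w' where "w' = w - (inner v w / (norm v)\<^sup>2) *\<^sub>R v"
  have "curvature \<Gamma> DG p v w = curvature \<Gamma> DG p v w'"
    unfolding w'_def curv_lin curv_self by simp
  also have "norm \<dots> \<le> c * (norm v * norm w')" by (rule c)
  also have "norm v * norm w' = wedge v w" unfolding w'_def by (rule wedge_perp[OF False])
  finally show ?thesis .
qed

lemma curv_bounded:
  fixes \<Gamma> :: "'p::real_normed_vector \<Rightarrow> ('p \<Rightarrow>\<^sub>L ('f::euclidean_space \<Rightarrow>\<^sub>L 'f))"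
  shows "\<exists>c\<ge>0. \<forall>v w. norm (curvature \<Gamma> DG p v w) \<le> c * (norm v * norm w)"
proof (intro exI[of _ "2 * norm (DG p) + 2 * (norm (\<Gamma> p))\<^sup>2"] conjI allI)
  show "0 \<le> 2 * norm (DG p) + 2 * (norm (\<Gamma> p))\<^sup>2" by simp
  fix v w
  have b1: "norm (DG p v w) \<le> norm (DG p) * (norm v * norm w)" for v w
  proof -
    have "norm (DG p v w) \<le> norm (DG p v) * norm w" by (rule norm_blinfun)
    also have "\<dots> \<le> (norm (DG p) * norm v) * norm w" by (intro mult_right_mono norm_blinfun) auto
    finally show ?thesis by (simp add: mult.assoc)
  qed
  have b2: "norm (\<Gamma> p v o\<^sub>L \<Gamma> p w) \<le> (norm (\<Gamma> p))\<^sup>2 * (norm v * norm w)" for v w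
  proof -
    have "norm (\<Gamma> p v o\<^sub>L \<Gamma> p w) \<le> norm (\<Gamma> p v) * norm (\<Gamma> p w)" by (rule norm_blinfun_compose)
    also have "\<dots> \<le> (norm (\<Gamma> p) * norm v) * (norm (\<Gamma> p) * norm w)"
      by (intro mult_mono norm_blinfun) auto
    finally show ?thesis by (simp add: power2_eq_square algebra_simps)
  qed
  have "norm (curvature \<Gamma> DG p v w) \<le> norm (DG p v w) + norm (DG p w v) + norm (\<Gamma> p v o\<^sub>L \<Gamma> p w) + norm (\<Gamma> p w o\<^sub>L \<Gamma> p v)"
    unfolding curvature_def by (smt (verit) norm_triangle_ineq4 norm_triangle_ineq)
  also have "\<dots> \<le> norm (DG p) * (norm v * norm w) + norm (DG p) * (norm w * norm v)
      + (norm (\<Gamma> p))\<^sup>2 * (norm v * norm w) + (norm (\<Gamma> p))\<^sup>2 * (norm w * norm v)"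
    by (intro add_mono b1 b2)
  also have "\<dots> = (2 * norm (DG p) + 2 * (norm (\<Gamma> p))\<^sup>2) * (norm v * norm w)" by (simp add: algebra_simps)
  finally show "norm (curvature \<Gamma> DG p v w) \<le> (2 * norm (DG p) + 2 * (norm (\<Gamma> p))\<^sup>2) * (norm v * norm w)" .
qed


context tri begin

lemma area_eq: "triangle_area x y z = wedge (y - x) (z - x) / 2"
  unfolding triangle_area_def wedge_def Let_def ..

lemma wedge_aa: "wedge ee (aa s) = 2 * triangle_area x y z"
proof -
  have "wedge ee (aa s) = wedge ee (y - x)" unfolding aa_eq by (rule wedge_shift)
  also have "\<dots> = wedge (y - x) ee" by (rule wedge_sym)
  also have "\<dots> = wedge (y - x) (ee + 1 *\<^sub>R (y - x))" by (rule wedge_shift[symmetric])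
  also have "ee + 1 *\<^sub>R (y - x) = z - x" unfolding ee_def by simp
  finally show ?thesis unfolding area_eq by simp
qed

lemma KK_bound:
  assumes c0: "c \<ge> 0" and c: "\<And>v w. norm (curvature \<Gamma> DG (phi s t) v w) \<le> c * (norm v * norm w)"
    and t: "t \<in> {0..1}"
  shows "norm (KK s t) \<le> c * (2 * triangle_area x y z) * t"
proof -
  have "norm (KK s t) \<le> c * wedge (t *\<^sub>R ee) (aa s)" unfolding KK_def by (rule curv_wedge[OF c0 c])
  also have "wedge (t *\<^sub>R ee) (aa s) = t * (2 * triangle_area x y z)"
    unfolding wedge_scale wedge_aa using t by simp
  finally show ?thesis by (simp add: mult_ac)
qed

lemma CC_integrand_bound:
  assumes s: "s \<in> {0..1}" and t: "t \<in> {0..1}"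
  shows "norm (SS s t o\<^sub>L (KK s t o\<^sub>L PP s t)) \<le> norm (KK s t)"
proof -
  have "norm (SS s t o\<^sub>L (KK s t o\<^sub>L PP s t)) \<le> norm (SS s t) * (norm (KK s t) * norm (PP s t))"
    by (meson mult_left_mono norm_blinfun_compose norm_ge_zero order_trans)
  also have "\<dots> \<le> 1 * (norm (KK s t) * 1)"
    using SS_norm[OF s t] PP_norm[OF s t] by (intro mult_mono) auto
  finally show ?thesis by simp
qed

lemma CC_bound_k:
  assumes k0: "k \<ge> 0" and kb: "\<And>p v w. p \<in> H \<Longrightarrow> norm (curvature \<Gamma> DG p v w) \<le> k * (norm v * norm w)"
    and s: "s \<in> {0..1}"
  shows "norm (CC s) \<le> k * triangle_area x y z"
proof -
  have gi: "((\<lambda>t. k * (2 * triangle_area x y z) * t ^ 1) has_integral k * (2 * triangle_area x y z) * (1 ^ Suc 1 / Suc 1)) {0..1}"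
    by (intro has_integral_mult_right power_has_integral_0) simp
  have "norm (CC s) = norm (integral {0..1} (\<lambda>t. SS s t o\<^sub>L (KK s t o\<^sub>L PP s t)))"
    using CC_int[OF s] by (simp add: integral_unique)
  also have "\<dots> \<le> integral {0..1} (\<lambda>t. k * (2 * triangle_area x y z) * t ^ 1)"
  proof (rule integral_norm_bound_integral)
    show "(\<lambda>t. SS s t o\<^sub>L (KK s t o\<^sub>L PP s t)) integrable_on {0..1}" using CC_int[OF s] by blast
    show "(\<lambda>t. k * (2 * triangle_area x y z) * t ^ 1) integrable_on {0..1}" using gi by blast
    fix t :: real assume t: "t \<in> {0..1}"
    have "norm (KK s t) \<le> k * (2 * triangle_area x y z) * t"
      by (rule KK_bound[OF k0 kb[OF phi_H[OF s t]] t])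
    then show "norm (SS s t o\<^sub>L (KK s t o\<^sub>L PP s t)) \<le> k * (2 * triangle_area x y z) * t ^ 1"
      using CC_integrand_bound[OF s t] by simp
  qed
  also have "\<dots> = k * triangle_area x y z" using gi by (simp add: integral_unique)
  finally show ?thesis .
qed

lemma CC_zero:
  assumes A0: "triangle_area x y z = 0" and s: "s \<in> {0..1}"
  shows "norm (CC s) \<le> 0"
proof -
  have "norm (CC s) \<le> 0 * (1 - 0)"
  proof (rule int_bound01[OF _ CC_int[OF s]])
    fix t :: real assume t: "t \<in> {0..1}"
    obtain c where c0: "c \<ge> 0" and c: "\<And>v w. norm (curvature \<Gamma> DG (phi s t) v w) \<le> c * (norm v * norm w)"
      using curv_bounded[of \<Gamma> DG "phi s t"] by blast
    have "norm (KK s t) \<le> 0" using KK_bound[OF c0 c t] A0 by simp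
    then show "norm (SS s t o\<^sub>L (KK s t o\<^sub>L PP s t)) \<le> 0" using CC_integrand_bound[OF s t] by simp
  qed auto
  then show ?thesis by simp
qed

end

context tri begin

lemma iso: "p \<in> H \<Longrightarrow> q \<in> H \<Longrightarrow> norm (transport \<Gamma> p q v) = norm v"
  by (rule transport_isometry[OF cvx cGam G_skew])

lemma holo_k:
  assumes "k \<ge> 0" "\<And>p v w. p \<in> H \<Longrightarrow> norm (curvature \<Gamma> DG p v w) \<le> k * (norm v * norm w)"
  shows "norm (transport \<Gamma> x z - (transport \<Gamma> x y o\<^sub>L transport \<Gamma> y z)) \<le> k * triangle_area x y z"
  by (rule holonomy_bound, rule CC_bound_k[OF assms])

lemma holo_0:
  assumes "triangle_area x y z = 0"
  shows "transport \<Gamma> x z = transport \<Gamma> x y o\<^sub>L transport \<Gamma> y z"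
proof -
  have "norm (transport \<Gamma> x z - (transport \<Gamma> x y o\<^sub>L transport \<Gamma> y z)) \<le> 0"
    by (rule holonomy_bound, rule CC_zero[OF assms])
  then show ?thesis by simp
qed

lemma holo_2: "norm ((transport \<Gamma> x z - (transport \<Gamma> x y o\<^sub>L transport \<Gamma> y z)) w) \<le> 2 * norm w"
proof -
  have "norm ((transport \<Gamma> x z - (transport \<Gamma> x y o\<^sub>L transport \<Gamma> y z)) w)
     \<le> norm (transport \<Gamma> x z w) + norm (transport \<Gamma> x y (transport \<Gamma> y z w))"
    by (simp add: blinfun.diff_left norm_triangle_ineq4)
  also have "\<dots> = 2 * norm w" using iso xH yH zH by simp
  finally show ?thesis .
qed

lemma tri_ineq:
  "norm (ux - transport \<Gamma> x y uy) \<le> norm (ux - transport \<Gamma> x z uz) + norm (uy - transport \<Gamma> y z uz)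
     + norm ((transport \<Gamma> x z - (transport \<Gamma> x y o\<^sub>L transport \<Gamma> y z)) uz)"
proof -
  have eq: "ux - transport \<Gamma> x y uy = (ux - transport \<Gamma> x z uz)
     + (transport \<Gamma> x z - (transport \<Gamma> x y o\<^sub>L transport \<Gamma> y z)) uz
     - transport \<Gamma> x y (uy - transport \<Gamma> y z uz)"
    by (simp add: blinfun.diff_left blinfun.diff_right)
  have "norm (ux - transport \<Gamma> x y uy) \<le> norm (ux - transport \<Gamma> x z uz)
     + norm ((transport \<Gamma> x z - (transport \<Gamma> x y o\<^sub>L transport \<Gamma> y z)) uz)
     + norm (transport \<Gamma> x y (uy - transport \<Gamma> y z uz))"
    unfolding eq by (smt (verit) norm_triangle_ineq norm_triangle_ineq4)
  then show ?thesis using iso[OF xH yH] by simp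
qed

end

lemma convex_half_space: "convex half_space"
  unfolding convex_def half_space_def by auto


theorem lemma2p7:
  fixes U :: "(real^'n) \<times> real \<Rightarrow> 'f::euclidean_space"
    and DU :: "(real^'n) \<times> real \<Rightarrow> (((real^'n) \<times> real) \<Rightarrow>\<^sub>L 'f)"
    and \<Gamma> :: "(real^'n) \<times> real \<Rightarrow> (((real^'n) \<times> real) \<Rightarrow>\<^sub>L ('f \<Rightarrow>\<^sub>L 'f))"
    and DG :: "(real^'n) \<times> real \<Rightarrow>
                 (((real^'n) \<times> real) \<Rightarrow>\<^sub>L (((real^'n) \<times> real) \<Rightarrow>\<^sub>L ('f \<Rightarrow>\<^sub>L 'f)))"
    and x y z :: "(real^'n) \<times> real"
  assumes U_deriv: "\<And>p. p \<in> half_space \<Longrightarrow> (U has_derivative blinfun_apply (DU p)) (at p within half_space)"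
    and U_cont: "continuous_on half_space DU"
    and G_deriv: "\<And>p. p \<in> half_space \<Longrightarrow> (\<Gamma> has_derivative blinfun_apply (DG p)) (at p within half_space)"
    and G_cont: "continuous_on half_space DG"
    and G_skew: "\<And>p v. p \<in> half_space \<Longrightarrow> skew (\<Gamma> p v)"
    and xH: "x \<in> half_space" and yH: "y \<in> half_space" and zH: "z \<in> half_space"
  shows "ereal (norm (U x - transport \<Gamma> x y (U y)))
    \<le> ereal (norm (U x - transport \<Gamma> x z (U z)) + norm (U y - transport \<Gamma> y z (U z)))
       + ereal (norm (U z)) * min 2 (curvature_sup \<Gamma> DG half_space * ereal (triangle_area x y z))"
proof -
  interpret tri \<Gamma> DG half_space x y z
    using convex_half_space G_deriv G_cont G_skew xH yH zH by unfold_locales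
  define A where "A = triangle_area x y z"
  define M where "M = transport \<Gamma> x z - (transport \<Gamma> x y o\<^sub>L transport \<Gamma> y z)"
  define a where "a = norm (U x - transport \<Gamma> x z (U z))"
  define b where "b = norm (U y - transport \<Gamma> y z (U z))"
  define D where "D = norm (M (U z))"
  define nz where "nz = norm (U z)"
  define CS where "CS = curvature_sup \<Gamma> DG half_space"
  have main: "norm (U x - transport \<Gamma> x y (U y)) \<le> a + b + D"
    unfolding a_def b_def D_def M_def by (rule tri_ineq)
  have D2: "D \<le> 2 * nz" unfolding D_def M_def nz_def by (rule holo_2)
  have A0: "A \<ge> 0" unfolding A_def area_eq using wedge_nonneg by simp
  have nz0: "nz \<ge> 0" unfolding nz_def by simp
  have CS0: "CS \<ge> 0"
  proof -
    define v :: "(real^'n) \<times> real" where "v = (0, 1)"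
    have v0: "v \<noteq> 0" unfolding v_def by (simp add: zero_prod_def)
    have "ereal (norm (curvature \<Gamma> DG x (fst (v, v)) (snd (v, v))) / (norm (fst (v, v)) * norm (snd (v, v)))) \<le> CS"
      unfolding CS_def curvature_sup_def
      by (rule SUP_upper2[OF xH], rule SUP_upper2[where i="(v, v)"]) (use v0 in auto)
    then show ?thesis by (simp add: curv_self zero_ereal_def)
  qed
  have goal: "ereal (norm (U x - transport \<Gamma> x y (U y))) \<le> ereal (a + b) + ereal nz * min 2 (CS * ereal A)"
  proof (cases CS)
    case (real k)
    have k0: "k \<ge> 0" using CS0 real by simp
    have kb: "norm (curvature \<Gamma> DG p v w) \<le> k * (norm v * norm w)" if p: "p \<in> half_space" for p v w
    proof (cases "v = 0 \<or> w = 0")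
      case True
      then have "curvature \<Gamma> DG p v w = 0"
        unfolding curvature_def by (auto intro!: blinfun_eqI simp: blinfun.bilinear_simps)
      then show ?thesis using True k0 by auto
    next
      case False
      have "ereal (norm (curvature \<Gamma> DG p (fst (v, w)) (snd (v, w))) / (norm (fst (v, w)) * norm (snd (v, w)))) \<le> CS"
        unfolding CS_def curvature_sup_def
        by (rule SUP_upper2[OF p], rule SUP_upper2[where i="(v, w)"]) (use False in auto)
      then have "norm (curvature \<Gamma> DG p v w) / (norm v * norm w) \<le> k" using real by simp
      then show ?thesis using False by (simp add: pos_divide_le_eq)
    qed
    have "D \<le> norm M * nz" unfolding D_def nz_def by (rule norm_blinfun)
    also have "\<dots> \<le> (k * A) * nz" unfolding M_def A_def
      by (intro mult_right_mono holo_k[OF k0 kb]) (auto simp: nz0)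
    finally have DkA: "D \<le> nz * (k * A)" by (simp add: mult.commute)
    have "D \<le> nz * min 2 (k * A)" using D2 DkA by (simp add: min_def mult.commute)
    then have "norm (U x - transport \<Gamma> x y (U y)) \<le> a + b + nz * min 2 (k * A)" using main by simp
    moreover have "ereal (a + b) + ereal nz * min 2 (CS * ereal A) = ereal (a + b + nz * min 2 (k * A))"
      using real by (simp add: min_def)
    ultimately show ?thesis by simp
  next
    case PInf
    show ?thesis
    proof (cases "A = 0")
      case True
      have "M = 0" unfolding M_def using holo_0 True A_def by simp
      then have "D = 0" unfolding D_def by simp
      then show ?thesis using main PInf True by simp
    next
      case False
      then have "A > 0" using A0 by simp
      then have inf: "CS * ereal A = \<infinity>" using PInf by simp
      have "min 2 (CS * ereal A) = 2" by (simp only: inf) simp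
      then have "ereal (a + b) + ereal nz * min 2 (CS * ereal A) = ereal (a + b + 2 * nz)"
        by (simp add: mult.commute)
      then show ?thesis using main D2 by simp
    qed
  next
    case MInf
    then show ?thesis using CS0 by simp
  qed
  then show ?thesis unfolding a_def b_def nz_def CS_def A_def .
qed


end
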